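(* If $M$ is a term of $\ell\Lambda_\infty^{4S}$, $M\to_0 N$ and $M\leadsto L$, then there is a term $P$ of $\ell\Lambda_\infty^{4S}$ such that $N\leadsto P$ and $L\to_0 P$.
   Context: Preterms: possibly infinite trees generated by $M ::= x \mid MN \mid \lambda x.M \mid \lambda^{\downarrow}x.M \mid \lambda^{\uparrow}x.M \mid \downarrow M \mid \uparrow M$ ($\downarrow M$ inductive box, $\uparrow M$ coinductive box); substitution is capture-avoiding. Patterns: $x,\downarrow x,\uparrow x,\#x,\dagger x$; environments: finite sets of patterns, each variable in at most one; $\Theta,\Xi,\Psi,\Phi$ linear environments with marked versions $\#\Theta$ etc.; $\Upsilon,\Pi$ environments with only patterns $y$, $\downarrow y$; commas are disjoint unions. A term of $\ell\Lambda_\infty^{4S}$ is a preterm $M$ with $\Gamma\vdash M$ derivable for some $\Gamma$ by: (vl) $\#\Theta,\uparrow\Xi,\dagger\Psi,x\vdash x$; (vd) $\#\Theta,\uparrow\Xi,\dagger\Psi,\#x\vdash x$; (va) $\#\Theta,\uparrow\Xi,\dagger\Psi,\dagger x\vdash x$; (a) from $\Upsilon,\#\Theta,\uparrow\Xi,\dagger\Psi\vdash M$ and $\Pi,\#\Theta,\uparrow\Xi,\dagger\Psi\vdash N$ infer $\Upsilon,\Pi,\#\Theta,\uparrow\Xi,\dagger\Psi\vdash MN$; (ll) $\Gamma,x\vdash M$ gives $\Gamma\vdash\lambda x.M$; (li)$_1$ $\Gamma,\#x\vdash M$ gives $\Gamma\vdash\lambda^\downarrow x.M$; (li)$_2$ $\Gamma,\downarrow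 x\vdash M$ gives $\Gamma\vdash\lambda^\downarrow x.M$; (lc) $\Gamma,\uparrow x\vdash M$ gives $\Gamma\vdash\lambda^\uparrow x.M$; (mi) from $\Xi,\uparrow\Psi,\dagger\Phi\vdash M$ infer $\#\Theta,\downarrow\Xi,\uparrow\Psi,\dagger\Phi\vdash\downarrow M$; (mc) from $\dagger\Xi,\dagger\Psi\vdash M$ infer $\#\Theta,\uparrow\Xi,\dagger\Psi\vdash\uparrow M$; (mc) coinductive, others inductive (every infinite branch of a derivation contains infinitely many (mc)). Basic reduction: $(\lambda x.M)N\mapsto M[N/x]$, $(\lambda^\downarrow x.M)(\downarrow N)\mapsto M[N/x]$, $(\lambda^\uparrow x.M)(\uparrow N)\mapsto M[N/x]$. $M\to N$ iff $M=C[L]$, $N=C[P]$, $L\mapsto P$ for a one-hole context $C$; $M\to_0 N$ is the special case in which the hole of $C$ lies inside no coinductive box $\uparrow(\cdot)$ (it may lie inside inductive boxes). Infinitary reduction $\Rightarrow$ and $\leadsto$ are given by the mixed formal system: (coinductive rule) if $M\to^*N$ and $N\leadsto L$ then $M\Rightarrow L$; (inductive rules) $x\leadsto x$; if $M\leadsto N$ and $L\leadsto P$ then $ML\leadsto NP$; if $M\leadsto N$ then $\lambda x.M\leadsto\lambda x.N$, $\lambda^\downarrow x.M\leadsto\lambda^\downarrow x.N$, $\lambda^\uparrow x.M\leadsto\lambda^\uparrow x.N$ and $\downarrow M\leadsto\downarrow N$; if $M\Rightarrow N$ then $\uparrow M\leadsto\uparrow N$. A judgment holds iff it is the root of a possibly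 infinite derivation tree in which every infinite branch uses the coinductive rule infinitely often. *)

theory Defs
  imports Main "HOL-Library.BNF_Corec"
begin

text \<open>Preterms are possibly infinite trees; we use de Bruijn indices, so alpha-equivalent
  named preterms are identified and substitution is automatically capture-avoiding.
  LamI = inductive-box lambda, LamC = coinductive-box lambda,
  BoxI = inductive box, BoxC = coinductive box.\<close>

codatatype trm =
    Var nat
  | App trm trm
  | Lam trm
  | LamI trm
  | LamC trm
  | BoxI trm
  | BoxC trm

primcorec lift :: "nat \<Rightarrow> trm \<Rightarrow> trm" where
  "lift k M = (case M of
       Var n \<Rightarrow> Var (if n < k then n else Suc n)
     | App A B \<Rightarrow> App (lift k A) (lift k B)
     | Lam A \<Rightarrow> Lam (lift (Suc k) A)
     | LamI A \<Rightarrow> LamI (lift (Suc k) A)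
     | LamC A \<Rightarrow> LamC (lift (Suc k) A)
     | BoxI A \<Rightarrow> BoxI (lift k A)
     | BoxC A \<Rightarrow> BoxC (lift k A))"

text \<open>\<open>subst k N M\<close> = M[N/k]: index k is replaced by N, larger free indices are decremented.\<close>

corec subst :: "nat \<Rightarrow> trm \<Rightarrow> trm \<Rightarrow> trm" where
  "subst k N M = (case M of
       Var n \<Rightarrow> (if n = k then N else if n < k then Var n else Var (n - 1))
     | App A B \<Rightarrow> App (subst k N A) (subst k N B)
     | Lam A \<Rightarrow> Lam (subst (Suc k) (lift 0 N) A)
     | LamI A \<Rightarrow> LamI (subst (Suc k) (lift 0 N) A)
     | LamC A \<Rightarrow> LamC (subst (Suc k) (lift 0 N) A)
     | BoxI A \<Rightarrow> BoxI (subst k N A)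
     | BoxC A \<Rightarrow> BoxC (subst k N A))"

text \<open>Patterns: PLin = x, PDown = \<down>x, PUp = \<up>x, PHash = #x, PDag = \<dagger>x.
  An environment assigns to each de Bruijn index at most one pattern.\<close>

datatype pat = PLin | PDown | PUp | PHash | PDag

type_synonym env = "nat \<Rightarrow> pat option"

definition ext :: "pat \<Rightarrow> env \<Rightarrow> env" where
  "ext p \<Gamma> = (\<lambda>n. case n of 0 \<Rightarrow> Some p | Suc m \<Rightarrow> \<Gamma> m)"

definition side_ok :: "nat \<Rightarrow> env \<Rightarrow> bool" where
  "side_ok n \<Gamma> \<longleftrightarrow> (\<forall>m. m \<noteq> n \<longrightarrow> \<Gamma> m \<in> {None, Some PHash, Some PUp, Some PDag})"

text \<open>Splitting for rule (a): \<Upsilon>,\<Pi>,#\<Theta>,\<up>\<Xi>,\<dagger>\<Psi> into \<Upsilon>,#\<Theta>,\<up>\<Xi>,\<dagger>\<Psi> and \<Pi>,#\<Theta>,\<up>\<Xi>,\<dagger>\<Psi>.\<close>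
definition app_split :: "env \<Rightarrow> env \<Rightarrow> env \<Rightarrow> bool" where
  "app_split \<Gamma> \<Gamma>1 \<Gamma>2 \<longleftrightarrow> (\<forall>n. case \<Gamma> n of
       None \<Rightarrow> \<Gamma>1 n = None \<and> \<Gamma>2 n = None
     | Some p \<Rightarrow> (if p \<in> {PLin, PDown}
                  then (\<Gamma>1 n = Some p \<and> \<Gamma>2 n = None) \<or> (\<Gamma>1 n = None \<and> \<Gamma>2 n = Some p)
                  else \<Gamma>1 n = Some p \<and> \<Gamma>2 n = Some p))"

text \<open>Rule (mi): conclusion #\<Theta>,\<down>\<Xi>,\<up>\<Psi>,\<dagger>\<Phi>, premise \<Xi>,\<up>\<Psi>,\<dagger>\<Phi>.\<close>
definition mi_env :: "env \<Rightarrow> env \<Rightarrow> bool" where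
  "mi_env \<Gamma> \<Gamma>' \<longleftrightarrow> (\<forall>n. case \<Gamma> n of
       None \<Rightarrow> \<Gamma>' n = None
     | Some PLin \<Rightarrow> False
     | Some PDown \<Rightarrow> \<Gamma>' n = Some PLin
     | Some PUp \<Rightarrow> \<Gamma>' n = Some PUp
     | Some PDag \<Rightarrow> \<Gamma>' n = Some PDag
     | Some PHash \<Rightarrow> \<Gamma>' n = None)"

text \<open>Rule (mc): conclusion #\<Theta>,\<up>\<Xi>,\<dagger>\<Psi>, premise \<dagger>\<Xi>,\<dagger>\<Psi>.\<close>
definition mc_env :: "env \<Rightarrow> env \<Rightarrow> bool" where
  "mc_env \<Gamma> \<Gamma>' \<longleftrightarrow> (\<forall>n. case \<Gamma> n of
       None \<Rightarrow> \<Gamma>' n = None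
     | Some PLin \<Rightarrow> False
     | Some PDown \<Rightarrow> False
     | Some PUp \<Rightarrow> \<Gamma>' n = Some PDag
     | Some PDag \<Rightarrow> \<Gamma>' n = Some PDag
     | Some PHash \<Rightarrow> \<Gamma>' n = None)"

text \<open>Inductive part of the typing system; premises of the coinductive rule (mc) refer to X.\<close>
inductive ty_i :: "(env \<Rightarrow> trm \<Rightarrow> bool) \<Rightarrow> env \<Rightarrow> trm \<Rightarrow> bool" for X where
  vl: "\<Gamma> n = Some PLin \<Longrightarrow> side_ok n \<Gamma> \<Longrightarrow> ty_i X \<Gamma> (Var n)"
| vd: "\<Gamma> n = Some PHash \<Longrightarrow> side_ok n \<Gamma> \<Longrightarrow> ty_i X \<Gamma> (Var n)"
| va: "\<Gamma> n = Some PDag \<Longrightarrow> side_ok n \<Gamma> \<Longrightarrow> ty_i X \<Gamma> (Var n)"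
| a: "app_split \<Gamma> \<Gamma>1 \<Gamma>2 \<Longrightarrow> ty_i X \<Gamma>1 M \<Longrightarrow> ty_i X \<Gamma>2 N \<Longrightarrow> ty_i X \<Gamma> (App M N)"
| ll: "ty_i X (ext PLin \<Gamma>) M \<Longrightarrow> ty_i X \<Gamma> (Lam M)"
| li1: "ty_i X (ext PHash \<Gamma>) M \<Longrightarrow> ty_i X \<Gamma> (LamI M)"
| li2: "ty_i X (ext PDown \<Gamma>) M \<Longrightarrow> ty_i X \<Gamma> (LamI M)"
| lc: "ty_i X (ext PUp \<Gamma>) M \<Longrightarrow> ty_i X \<Gamma> (LamC M)"
| mi: "mi_env \<Gamma> \<Gamma>' \<Longrightarrow> ty_i X \<Gamma>' M \<Longrightarrow> ty_i X \<Gamma> (BoxI M)"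
| mc: "mc_env \<Gamma> \<Gamma>' \<Longrightarrow> X \<Gamma>' M \<Longrightarrow> ty_i X \<Gamma> (BoxC M)"

lemma ty_i_mono[mono]: "X \<le> Y \<Longrightarrow> ty_i X \<le> ty_i Y"
proof (intro le_funI le_boolI)
  fix \<Gamma> M assume XY: "X \<le> Y" and H: "ty_i X \<Gamma> M"
  from H show "ty_i Y \<Gamma> M"
    by (induction rule: ty_i.induct) (use XY in \<open>auto intro: ty_i.intros\<close>)
qed

text \<open>Mixed derivability: greatest fixed point over the coinductive rule (mc),
  least fixed point over all other rules.\<close>
coinductive ty :: "env \<Rightarrow> trm \<Rightarrow> bool" where
  "ty_i ty \<Gamma> M \<Longrightarrow> ty \<Gamma> M"

definition is_term :: "trm \<Rightarrow> bool" where
  "is_term M \<longleftrightarrow> (\<exists>\<Gamma>. finite (dom \<Gamma>) \<and> ty \<Gamma> M)"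

inductive basic :: "trm \<Rightarrow> trm \<Rightarrow> bool" where
  "basic (App (Lam M) N) (subst 0 N M)"
| "basic (App (LamI M) (BoxI N)) (subst 0 N M)"
| "basic (App (LamC M) (BoxC N)) (subst 0 N M)"

inductive step :: "trm \<Rightarrow> trm \<Rightarrow> bool" where
  "basic M N \<Longrightarrow> step M N"
| "step M M' \<Longrightarrow> step (App M N) (App M' N)"
| "step N N' \<Longrightarrow> step (App M N) (App M N')"
| "step M M' \<Longrightarrow> step (Lam M) (Lam M')"
| "step M M' \<Longrightarrow> step (LamI M) (LamI M')"
| "step M M' \<Longrightarrow> step (LamC M) (LamC M')"
| "step M M' \<Longrightarrow> step (BoxI M) (BoxI M')"
| "step M M' \<Longrightarrow> step (BoxC M) (BoxC M')"

text \<open>\<open>\<rightarrow>\<^sub>0\<close>: the hole is not inside any coinductive box.\<close>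
inductive step0 :: "trm \<Rightarrow> trm \<Rightarrow> bool" where
  "basic M N \<Longrightarrow> step0 M N"
| "step0 M M' \<Longrightarrow> step0 (App M N) (App M' N)"
| "step0 N N' \<Longrightarrow> step0 (App M N) (App M N')"
| "step0 M M' \<Longrightarrow> step0 (Lam M) (Lam M')"
| "step0 M M' \<Longrightarrow> step0 (LamI M) (LamI M')"
| "step0 M M' \<Longrightarrow> step0 (LamC M) (LamC M')"
| "step0 M M' \<Longrightarrow> step0 (BoxI M) (BoxI M')"

text \<open>Inductive rules for \<open>\<leadsto>\<close>, with premise of the \<up>-box rule referring to X (for \<Rightarrow>).\<close>
inductive ired :: "(trm \<Rightarrow> trm \<Rightarrow> bool) \<Rightarrow> trm \<Rightarrow> trm \<Rightarrow> bool" for X where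
  "ired X (Var x) (Var x)"
| "ired X M N \<Longrightarrow> ired X L P \<Longrightarrow> ired X (App M L) (App N P)"
| "ired X M N \<Longrightarrow> ired X (Lam M) (Lam N)"
| "ired X M N \<Longrightarrow> ired X (LamI M) (LamI N)"
| "ired X M N \<Longrightarrow> ired X (LamC M) (LamC N)"
| "ired X M N \<Longrightarrow> ired X (BoxI M) (BoxI N)"
| "X M N \<Longrightarrow> ired X (BoxC M) (BoxC N)"

lemma ired_mono[mono]: "X \<le> Y \<Longrightarrow> ired X \<le> ired Y"
proof (intro le_funI le_boolI)
  fix M N assume XY: "X \<le> Y" and H: "ired X M N"
  from H show "ired Y M N"
    by (induction rule: ired.induct) (use XY in \<open>auto intro: ired.intros\<close>)
qed

coinductive cored :: "trm \<Rightarrow> trm \<Rightarrow> bool" where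
  "step\<^sup>*\<^sup>* M N \<Longrightarrow> ired cored N L \<Longrightarrow> cored M L"

abbreviation ired_rel :: "trm \<Rightarrow> trm \<Rightarrow> bool" where
  "ired_rel \<equiv> ired cored"

end

theory Submission
  imports Defs
begin


lemma trm_eq_coinduct:
  assumes "R a b"
  and step: "\<And>a b. R a b \<Longrightarrow> a = b \<or> (\<exists>n. a = Var n \<and> b = Var n)
    \<or> (\<exists>a1 a2 b1 b2. a = App a1 a2 \<and> b = App b1 b2 \<and> (R a1 b1 \<or> a1 = b1) \<and> (R a2 b2 \<or> a2 = b2))
    \<or> (\<exists>a1 b1. a = Lam a1 \<and> b = Lam b1 \<and> (R a1 b1 \<or> a1 = b1))
    \<or> (\<exists>a1 b1. a = LamI a1 \<and> b = LamI b1 \<and> (R a1 b1 \<or> a1 = b1))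
    \<or> (\<exists>a1 b1. a = LamC a1 \<and> b = LamC b1 \<and> (R a1 b1 \<or> a1 = b1))
    \<or> (\<exists>a1 b1. a = BoxI a1 \<and> b = BoxI b1 \<and> (R a1 b1 \<or> a1 = b1))
    \<or> (\<exists>a1 b1. a = BoxC a1 \<and> b = BoxC b1 \<and> (R a1 b1 \<or> a1 = b1))"
  shows "a = b"
proof (rule trm.coinduct[of "\<lambda>a b. R a b \<or> a = b"])
  show "R a b \<or> a = b" using assms(1) by simp
next
  fix a b assume "R a b \<or> a = b"
  then show "is_Var a = is_Var b \<and>
    (is_Var a \<longrightarrow> is_Var b \<longrightarrow> un_Var a = un_Var b) \<and>
    is_App a = is_App b \<and>
    (is_App a \<longrightarrow> is_App b \<longrightarrow> (R (un_App1 a) (un_App1 b) \<or> un_App1 a = un_App1 b) \<and> (R (un_App2 a) (un_App2 b) \<or> un_App2 a = un_App2 b)) \<and>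
    is_Lam a = is_Lam b \<and>
    (is_Lam a \<longrightarrow> is_Lam b \<longrightarrow> (R (un_Lam a) (un_Lam b) \<or> un_Lam a = un_Lam b)) \<and>
    is_LamI a = is_LamI b \<and>
    (is_LamI a \<longrightarrow> is_LamI b \<longrightarrow> (R (un_LamI a) (un_LamI b) \<or> un_LamI a = un_LamI b)) \<and>
    is_LamC a = is_LamC b \<and>
    (is_LamC a \<longrightarrow> is_LamC b \<longrightarrow> (R (un_LamC a) (un_LamC b) \<or> un_LamC a = un_LamC b)) \<and>
    is_BoxI a = is_BoxI b \<and>
    (is_BoxI a \<longrightarrow> is_BoxI b \<longrightarrow> (R (un_BoxI a) (un_BoxI b) \<or> un_BoxI a = un_BoxI b)) \<and>
    (is_BoxC a \<longrightarrow> is_BoxC b \<longrightarrow> (R (un_BoxC a) (un_BoxC b) \<or> un_BoxC a = un_BoxC b))"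
  proof
    assume "R a b"
    from step[OF this] show ?thesis by (elim disjE exE conjE; simp)
  next
    assume "a = b" then show ?thesis by simp
  qed
qed

lemma lift_simps[simp]:
  "lift k (Var n) = Var (if n < k then n else Suc n)"
  "lift k (App A B) = App (lift k A) (lift k B)"
  "lift k (Lam A) = Lam (lift (Suc k) A)"
  "lift k (LamI A) = LamI (lift (Suc k) A)"
  "lift k (LamC A) = LamC (lift (Suc k) A)"
  "lift k (BoxI A) = BoxI (lift k A)"
  "lift k (BoxC A) = BoxC (lift k A)"
  by (subst lift.code; simp)+

lemma subst_simps[simp]:
  "subst k N (Var n) = (if n = k then N else if n < k then Var n else Var (n - 1))"
  "subst k N (App A B) = App (subst k N A) (subst k N B)"
  "subst k N (Lam A) = Lam (subst (Suc k) (lift 0 N) A)"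
  "subst k N (LamI A) = LamI (subst (Suc k) (lift 0 N) A)"
  "subst k N (LamC A) = LamC (subst (Suc k) (lift 0 N) A)"
  "subst k N (BoxI A) = BoxI (subst k N A)"
  "subst k N (BoxC A) = BoxC (subst k N A)"
  by (subst subst.code; simp)+

lemma lift_lift: "j \<le> k \<Longrightarrow> lift j (lift k M) = lift (Suc k) (lift j M)"
  apply (coinduction arbitrary: j k M rule: trm_eq_coinduct)
  subgoal for j k M
    apply (cases M)
    apply (simp_all)
    apply (metis Suc_le_mono)+
    done
  done

lemma lift_subst: "j \<le> k \<Longrightarrow> lift k (subst j N A) = subst j (lift k N) (lift (Suc k) A)"
  apply (coinduction arbitrary: j k N A rule: trm_eq_coinduct)
  subgoal for j k N A
    apply (cases A)
    apply (simp_all add: lift_lift)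
    apply (fastforce simp: lift_lift)+
    done
  done

lemma lift_subst2: "j \<le> k \<Longrightarrow> lift j (subst k B N) = subst (Suc k) (lift j B) (lift j N)"
  apply (coinduction arbitrary: j k B N rule: trm_eq_coinduct)
  subgoal for j k B N
    apply (cases N)
    apply (simp_all add: lift_lift)
    apply (fastforce simp: lift_lift)+
    done
  done

lemma subst_lift: "subst j X (lift j M) = M"
  apply (coinduction arbitrary: j X M rule: trm_eq_coinduct)
  subgoal for j X M
    apply (cases M)
    apply (simp_all)
    apply blast+
    done
  done

lemma subst_subst: "j \<le> k \<Longrightarrow> subst k B (subst j N A) = subst j (subst k B N) (subst (Suc k) (lift j B) A)"
  apply (coinduction arbitrary: j k B N A rule: trm_eq_coinduct)
  subgoal for j k B N A
    apply (cases A)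
    subgoal for n by (rule disjI1) (auto simp: subst_lift)
    subgoal by simp blast
    subgoal by (rule disjI2, simp add: lift_lift lift_subst2, rule disjI1, (rule exI)+, rule conjI, rule refl, rule conjI, rule refl, simp)
    subgoal by (rule disjI2, simp add: lift_lift lift_subst2, rule disjI1, (rule exI)+, rule conjI, rule refl, rule conjI, rule refl, simp)
    subgoal by (rule disjI2, simp add: lift_lift lift_subst2, rule disjI1, (rule exI)+, rule conjI, rule refl, rule conjI, rule refl, simp)
    subgoal by simp blast
    subgoal by simp blast
    done
  done


section \<open>Reduction closure\<close>

lemma step_lift: "step M N \<Longrightarrow> step (lift k M) (lift k N)"
proof (induction arbitrary: k rule: step.induct)
  case (1 M N)
  then show ?case
  proof cases
    case (1 A B) then show ?thesis
      using basic.intros(1)[of "lift (Suc k) A" "lift k B"] step.intros(1) by (simp add: lift_subst)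
  next
    case (2 A B) then show ?thesis
      using basic.intros(2)[of "lift (Suc k) A" "lift k B"] step.intros(1) by (simp add: lift_subst)
  next
    case (3 A B) then show ?thesis
      using basic.intros(3)[of "lift (Suc k) A" "lift k B"] step.intros(1) by (simp add: lift_subst)
  qed
qed (auto intro: step.intros)

lemma step_subst: "step M N \<Longrightarrow> step (subst k B M) (subst k B N)"
proof (induction arbitrary: k B rule: step.induct)
  case (1 M N)
  then show ?case
  proof cases
    case (1 A C) then show ?thesis
      using basic.intros(1)[of "subst (Suc k) (lift 0 B) A" "subst k B C"] step.intros(1) by (simp add: subst_subst)
  next
    case (2 A C) then show ?thesis
      using basic.intros(2)[of "subst (Suc k) (lift 0 B) A" "subst k B C"] step.intros(1) by (simp add: subst_subst)
  next
    case (3 A C) then show ?thesis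
      using basic.intros(3)[of "subst (Suc k) (lift 0 B) A" "subst k B C"] step.intros(1) by (simp add: subst_subst)
  qed
qed (auto intro: step.intros)

lemma steps_lift: "step\<^sup>*\<^sup>* M N \<Longrightarrow> step\<^sup>*\<^sup>* (lift k M) (lift k N)"
  by (induction rule: rtranclp_induct) (auto intro: rtranclp.rtrancl_into_rtrancl step_lift)

lemma steps_subst: "step\<^sup>*\<^sup>* M N \<Longrightarrow> step\<^sup>*\<^sup>* (subst k B M) (subst k B N)"
  by (induction rule: rtranclp_induct) (auto intro: rtranclp.rtrancl_into_rtrancl step_subst)

lemma steps_map: "step\<^sup>*\<^sup>* M N \<Longrightarrow> (\<And>x y. step x y \<Longrightarrow> step (f x) (f y)) \<Longrightarrow> step\<^sup>*\<^sup>* (f M) (f N)"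
  by (induction rule: rtranclp_induct) (auto intro: rtranclp.rtrancl_into_rtrancl)

lemma steps_App: "step\<^sup>*\<^sup>* M M' \<Longrightarrow> step\<^sup>*\<^sup>* N N' \<Longrightarrow> step\<^sup>*\<^sup>* (App M N) (App M' N')"
proof -
  assume a: "step\<^sup>*\<^sup>* M M'" and b: "step\<^sup>*\<^sup>* N N'"
  have "step\<^sup>*\<^sup>* (App M N) (App M' N)" using steps_map[OF a, of "\<lambda>x. App x N"] by (auto intro: step.intros)
  moreover have "step\<^sup>*\<^sup>* (App M' N) (App M' N')" using steps_map[OF b, of "\<lambda>x. App M' x"] by (auto intro: step.intros)
  ultimately show ?thesis by simp
qed

lemma steps_Lam: "step\<^sup>*\<^sup>* M M' \<Longrightarrow> step\<^sup>*\<^sup>* (Lam M) (Lam M')"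
  using steps_map[of M M' Lam] by (auto intro: step.intros)
lemma steps_LamI: "step\<^sup>*\<^sup>* M M' \<Longrightarrow> step\<^sup>*\<^sup>* (LamI M) (LamI M')"
  using steps_map[of M M' LamI] by (auto intro: step.intros)
lemma steps_LamC: "step\<^sup>*\<^sup>* M M' \<Longrightarrow> step\<^sup>*\<^sup>* (LamC M) (LamC M')"
  using steps_map[of M M' LamC] by (auto intro: step.intros)
lemma steps_BoxI: "step\<^sup>*\<^sup>* M M' \<Longrightarrow> step\<^sup>*\<^sup>* (BoxI M) (BoxI M')"
  using steps_map[of M M' BoxI] by (auto intro: step.intros)

lemma ired_mono': "ired X a b \<Longrightarrow> (\<And>x y. X x y \<Longrightarrow> Y x y) \<Longrightarrow> ired Y a b"
  using ired_mono[of X Y] by blast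

lemma ired_cored: "ired cored A B \<Longrightarrow> cored A B"
  by (rule cored.intros[OF rtranclp.rtrancl_refl])

lemma cored_lift: "cored X Y \<Longrightarrow> cored (lift k X) (lift k Y)"
proof (coinduction arbitrary: k X Y rule: cored.coinduct)
  case (cored k X Y)
  let ?R = "\<lambda>a b. (\<exists>k X Y. a = lift k X \<and> b = lift k Y \<and> cored X Y) \<or> cored a b"
  from cored obtain X1 where s: "step\<^sup>*\<^sup>* X X1" and i: "ired cored X1 Y" by (cases rule: cored.cases) auto
  have "ired ?R (lift k X1) (lift k Y)" using i
    by (induction arbitrary: k rule: ired.induct) (auto intro: ired.intros)
  then show ?case using steps_lift[OF s] by blast
qed

lemma ired_lift: "ired cored X Y \<Longrightarrow> ired cored (lift k X) (lift k Y)"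
  by (induction arbitrary: k rule: ired.induct) (auto intro: ired.intros cored_lift)

lemma cored_subst: "cored X Y \<Longrightarrow> cored B B' \<Longrightarrow> cored (subst k B X) (subst k B' Y)"
proof (coinduction arbitrary: k B B' X Y rule: cored.coinduct)
  case (cored k B B' X Y)
  let ?R = "\<lambda>a b. (\<exists>k B B' X Y. a = subst k B X \<and> b = subst k B' Y \<and> cored X Y \<and> cored B B') \<or> cored a b"
  from cored obtain X1 where s: "step\<^sup>*\<^sup>* X X1" and i: "ired cored X1 Y" by (cases rule: cored.cases) auto
  have "\<exists>Z. step\<^sup>*\<^sup>* (subst k B X1) Z \<and> ired ?R Z (subst k B' Y)" if "cored B B'" for k B B'
    using i that
  proof (induction arbitrary: k B B' rule: ired.induct)
    case (1 x)
    show ?case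
    proof (cases "x = k")
      case True
      from 1 obtain B1 where "step\<^sup>*\<^sup>* B B1" "ired cored B1 B'" by (cases rule: cored.cases) auto
      then show ?thesis using True by (auto intro: ired_mono')
    next
      case False then show ?thesis by (auto intro: ired.intros)
    qed
  next
    case (2 M N L P)
    then obtain Z1 Z2 where "step\<^sup>*\<^sup>* (subst k B M) Z1" "ired ?R Z1 (subst k B' N)"
      "step\<^sup>*\<^sup>* (subst k B L) Z2" "ired ?R Z2 (subst k B' P)" by meson
    then show ?case by (auto intro!: exI[of _ "App Z1 Z2"] steps_App ired.intros)
  next
    case (3 M N)
    then obtain Z where "step\<^sup>*\<^sup>* (subst (Suc k) (lift 0 B) M) Z" "ired ?R Z (subst (Suc k) (lift 0 B') N)"
      using cored_lift by meson
    then show ?case by (auto intro!: exI[of _ "Lam Z"] steps_Lam ired.intros)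
  next
    case (4 M N)
    then obtain Z where "step\<^sup>*\<^sup>* (subst (Suc k) (lift 0 B) M) Z" "ired ?R Z (subst (Suc k) (lift 0 B') N)"
      using cored_lift by meson
    then show ?case by (auto intro!: exI[of _ "LamI Z"] steps_LamI ired.intros)
  next
    case (5 M N)
    then obtain Z where "step\<^sup>*\<^sup>* (subst (Suc k) (lift 0 B) M) Z" "ired ?R Z (subst (Suc k) (lift 0 B') N)"
      using cored_lift by meson
    then show ?case by (auto intro!: exI[of _ "LamC Z"] steps_LamC ired.intros)
  next
    case (6 M N)
    then obtain Z where "step\<^sup>*\<^sup>* (subst k B M) Z" "ired ?R Z (subst k B' N)" by meson
    then show ?case by (auto intro!: exI[of _ "BoxI Z"] steps_BoxI ired.intros)
  next
    case (7 M N)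
    show ?case apply (rule exI[of _ "BoxC (subst k B M)"]) apply simp
      apply (rule ired.intros(7)) using 7 by blast
  qed
  from this[OF cored(2)] obtain Z where "step\<^sup>*\<^sup>* (subst k B X1) Z" "ired ?R Z (subst k B' Y)" by blast
  moreover have "step\<^sup>*\<^sup>* (subst k B X) (subst k B X1)" using steps_subst[OF s] .
  ultimately show ?case by (meson rtranclp_trans)
qed

lemma ired_subst: "ired cored A A' \<Longrightarrow> ired cored B B' \<Longrightarrow> ired cored (subst k B A) (subst k B' A')"
proof (induction arbitrary: k B B' rule: ired.induct)
  case (3 M N) show ?case by (simp, rule ired.intros, rule "3.IH", rule ired_lift, rule "3.prems")
next
  case (4 M N) show ?case by (simp, rule ired.intros, rule "4.IH", rule ired_lift, rule "4.prems")
next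
  case (5 M N) show ?case by (simp, rule ired.intros, rule "5.IH", rule ired_lift, rule "5.prems")
qed (auto intro: ired.intros cored_subst ired_cored)

inductive occ0 :: "nat \<Rightarrow> trm \<Rightarrow> bool" where
  "occ0 k (Var k)"
| "occ0 k M \<Longrightarrow> occ0 k (App M N)"
| "occ0 k N \<Longrightarrow> occ0 k (App M N)"
| "occ0 (Suc k) M \<Longrightarrow> occ0 k (Lam M)"
| "occ0 (Suc k) M \<Longrightarrow> occ0 k (LamI M)"
| "occ0 (Suc k) M \<Longrightarrow> occ0 k (LamC M)"
| "occ0 k M \<Longrightarrow> occ0 k (BoxI M)"

lemma ired_subst_guard: "ired cored A A' \<Longrightarrow> \<not> occ0 k A \<Longrightarrow> cored B B' \<Longrightarrow> ired cored (subst k B A) (subst k B' A')"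
proof (induction arbitrary: k B B' rule: ired.induct)
  case (2 M N L P)
  have "\<not> occ0 k M" "\<not> occ0 k L" using 2 occ0.intros(2,3) by blast+
  then show ?case using 2 by (auto intro!: ired.intros)
next
  case (3 M N) then show ?case by (auto intro!: ired.intros cored_lift intro: occ0.intros)
next
  case (4 M N) then show ?case by (auto intro!: ired.intros cored_lift intro: occ0.intros)
next
  case (5 M N) then show ?case by (auto intro!: ired.intros cored_lift intro: occ0.intros)
next
  case (6 M N) then show ?case by (auto intro!: ired.intros intro: occ0.intros)
qed (auto intro: ired.intros cored_subst occ0.intros)




definition sp :: "pat option \<Rightarrow> pat option \<Rightarrow> pat option \<Rightarrow> bool" where
  "sp c c1 c2 \<longleftrightarrow> (case c of None \<Rightarrow> c1 = None \<and> c2 = None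
     | Some p \<Rightarrow> (if p \<in> {PLin, PDown} then (c1 = Some p \<and> c2 = None) \<or> (c1 = None \<and> c2 = Some p)
                 else c1 = Some p \<and> c2 = Some p))"

lemma app_split_sp: "app_split \<Gamma> \<Gamma>1 \<Gamma>2 \<longleftrightarrow> (\<forall>n. sp (\<Gamma> n) (\<Gamma>1 n) (\<Gamma>2 n))"
  by (simp add: app_split_def sp_def)

definition nl :: "pat option \<Rightarrow> bool" where
  "nl c \<longleftrightarrow> c \<in> {None, Some PHash, Some PUp, Some PDag}"

lemma side_ok_nl: "side_ok n \<Gamma> \<longleftrightarrow> (\<forall>m. m \<noteq> n \<longrightarrow> nl (\<Gamma> m))"
  by (simp add: side_ok_def nl_def)

definition mif :: "pat option \<Rightarrow> pat option" where
  "mif c = (case c of Some PDown \<Rightarrow> Some PLin | Some PUp \<Rightarrow> Some PUp | Some PDag \<Rightarrow> Some PDag | _ \<Rightarrow> None)"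

definition mcf :: "pat option \<Rightarrow> pat option" where
  "mcf c = (case c of Some PUp \<Rightarrow> Some PDag | Some PDag \<Rightarrow> Some PDag | _ \<Rightarrow> None)"

lemma mi_pt: "(case c of None \<Rightarrow> g = None | Some PLin \<Rightarrow> False | Some PDown \<Rightarrow> g = Some PLin
     | Some PUp \<Rightarrow> g = Some PUp | Some PDag \<Rightarrow> g = Some PDag | Some PHash \<Rightarrow> g = None)
  \<longleftrightarrow> (c \<noteq> Some PLin \<and> g = mif c)"
  by (cases c) (auto simp: mif_def split: pat.split)

lemma mc_pt: "(case c of None \<Rightarrow> g = None | Some PLin \<Rightarrow> False | Some PDown \<Rightarrow> False
     | Some PUp \<Rightarrow> g = Some PDag | Some PDag \<Rightarrow> g = Some PDag | Some PHash \<Rightarrow> g = None)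
  \<longleftrightarrow> (c \<noteq> Some PLin \<and> c \<noteq> Some PDown \<and> g = mcf c)"
  by (cases c) (auto simp: mcf_def split: pat.split)

lemma mi_env_iff: "mi_env \<Gamma> G \<longleftrightarrow> (\<forall>n. \<Gamma> n \<noteq> Some PLin) \<and> G = (\<lambda>n. mif (\<Gamma> n))"
  unfolding mi_env_def mi_pt fun_eq_iff by blast

lemma mc_env_iff: "mc_env \<Gamma> G \<longleftrightarrow> (\<forall>n. \<Gamma> n \<noteq> Some PLin \<and> \<Gamma> n \<noteq> Some PDown) \<and> G = (\<lambda>n. mcf (\<Gamma> n))"
  unfolding mc_env_def mc_pt fun_eq_iff by blast

definition shift :: "nat \<Rightarrow> nat \<Rightarrow> nat" where
  "shift k n = (if n < k then n else Suc n)"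

definition ins :: "nat \<Rightarrow> pat option \<Rightarrow> env \<Rightarrow> env" where
  "ins k c \<Gamma> = (\<lambda>n. if n < k then \<Gamma> n else if n = k then c else \<Gamma> (n - 1))"

definition del :: "nat \<Rightarrow> env \<Rightarrow> env" where
  "del k \<Gamma> = (\<lambda>n. if n < k then \<Gamma> n else \<Gamma> (Suc n))"

lemma ins_k[simp]: "ins k c \<Gamma> k = c" by (simp add: ins_def)
lemma ins_shift[simp]: "ins k c \<Gamma> (shift k n) = \<Gamma> n" by (simp add: ins_def shift_def)
lemma shift_neq[simp]: "shift k n \<noteq> k" by (simp add: shift_def)
lemma shift_inj[simp]: "shift k n = shift k m \<longleftrightarrow> n = m" by (auto simp: shift_def)
lemma shift_cases: "n \<noteq> k \<Longrightarrow> \<exists>m. n = shift k m"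
  by (rule exI[of _ "if n < k then n else n - 1"]) (auto simp: shift_def)
lemma ins_del: "ins k (G k) (del k G) = G" by (auto simp: ins_def del_def fun_eq_iff)
lemma del_ins[simp]: "del k (ins k c G) = G" by (auto simp: ins_def del_def fun_eq_iff)
lemma ins_eq_iff: "ins k c \<Gamma> = ins k c' \<Gamma>' \<longleftrightarrow> c = c' \<and> \<Gamma> = \<Gamma>'"
  by (metis del_ins ins_k)
lemma ext_ins: "ext p \<Gamma> = ins 0 (Some p) \<Gamma>"
  by (auto simp: ext_def ins_def fun_eq_iff split: nat.splits)
lemma ins_ins0: "ins (Suc k) c (ins 0 d \<Gamma>) = ins 0 d (ins k c \<Gamma>)"
  by (auto simp: ins_def fun_eq_iff)
lemma ins_comp: "(\<lambda>n. f (ins k c \<Gamma> n)) = ins k (f c) (\<lambda>n. f (\<Gamma> n))"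
  by (auto simp: ins_def fun_eq_iff)
lemma ins_decomp: "\<exists>c G1. G = ins k c G1" using ins_del by metis

lemma all_ins: "(\<forall>n. P (ins k c \<Gamma> n) n) \<longleftrightarrow> P c k \<and> (\<forall>m. P (\<Gamma> m) (shift k m))"
  by (metis ins_k ins_shift shift_cases)

lemma split_ins_iff: "app_split (ins k c \<Gamma>) (ins k c1 \<Gamma>1) (ins k c2 \<Gamma>2) \<longleftrightarrow> sp c c1 c2 \<and> app_split \<Gamma> \<Gamma>1 \<Gamma>2"
  unfolding app_split_sp
proof -
  have "(\<forall>n. sp (ins k c \<Gamma> n) (ins k c1 \<Gamma>1 n) (ins k c2 \<Gamma>2 n)) \<longleftrightarrow>
        (\<forall>n. (\<lambda>x n. sp (ins k c \<Gamma> n) (ins k c1 \<Gamma>1 n) (ins k c2 \<Gamma>2 n)) (ins k c \<Gamma> n) n)" by simp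
  then show "(\<forall>n. sp (ins k c \<Gamma> n) (ins k c1 \<Gamma>1 n) (ins k c2 \<Gamma>2 n)) = (sp c c1 c2 \<and> (\<forall>n. sp (\<Gamma> n) (\<Gamma>1 n) (\<Gamma>2 n)))"
    by (metis ins_k ins_shift shift_cases)
qed

lemma split_ins: "app_split (ins k c \<Gamma>) G1 G2 \<Longrightarrow>
  \<exists>c1 c2 \<Gamma>1 \<Gamma>2. G1 = ins k c1 \<Gamma>1 \<and> G2 = ins k c2 \<Gamma>2 \<and> sp c c1 c2 \<and> app_split \<Gamma> \<Gamma>1 \<Gamma>2"
  by (metis ins_del split_ins_iff)

lemma mi_ins: "mi_env (ins k c \<Gamma>) G \<longleftrightarrow> (\<exists>G1. G = ins k (mif c) G1 \<and> mi_env \<Gamma> G1 \<and> c \<noteq> Some PLin)"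
  unfolding mi_env_iff ins_comp
  by (auto simp: ins_eq_iff all_ins[where P="\<lambda>x n. x \<noteq> Some PLin"])

lemma mc_ins: "mc_env (ins k c \<Gamma>) G \<longleftrightarrow> (\<exists>G1. G = ins k (mcf c) G1 \<and> mc_env \<Gamma> G1 \<and> c \<noteq> Some PLin \<and> c \<noteq> Some PDown)"
  unfolding mc_env_iff ins_comp
  by (auto simp: ins_eq_iff all_ins[where P="\<lambda>x n. x \<noteq> Some PLin \<and> x \<noteq> Some PDown"])

lemma side_ok_ins_k: "side_ok k (ins k c \<Gamma>) \<longleftrightarrow> (\<forall>m. nl (\<Gamma> m))"
  unfolding side_ok_nl by (metis ins_shift shift_cases shift_neq)

lemma side_ok_ins_shift: "side_ok (shift k n) (ins k c \<Gamma>) \<longleftrightarrow> nl c \<and> side_ok n \<Gamma>"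
  unfolding side_ok_nl by (metis ins_k ins_shift shift_cases shift_inj shift_neq)


lemma ty_iff: "ty \<Gamma> M \<longleftrightarrow> ty_i ty \<Gamma> M"
  by (auto elim: ty.cases intro: ty.intros)

lemma ty_i_mono': "ty_i X \<Gamma> M \<Longrightarrow> (\<And>a b. X a b \<Longrightarrow> Y a b) \<Longrightarrow> ty_i Y \<Gamma> M"
  using ty_i_mono[of X Y] by blast

inductive_cases tyVarE: "ty_i X \<Gamma> (Var n)"
inductive_cases tyAppE: "ty_i X \<Gamma> (App M N)"
inductive_cases tyLamE: "ty_i X \<Gamma> (Lam M)"
inductive_cases tyLamIE: "ty_i X \<Gamma> (LamI M)"
inductive_cases tyLamCE: "ty_i X \<Gamma> (LamC M)"
inductive_cases tyBoxIE: "ty_i X \<Gamma> (BoxI M)"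
inductive_cases tyBoxCE: "ty_i X \<Gamma> (BoxC M)"

lemma ty_var_iff: "ty_i X \<Gamma> (Var n) \<longleftrightarrow> \<Gamma> n \<in> {Some PLin, Some PHash, Some PDag} \<and> side_ok n \<Gamma>"
  by (auto elim: tyVarE intro: ty_i.intros)

definition wk :: "pat option \<Rightarrow> pat option \<Rightarrow> bool" where
  "wk a b \<longleftrightarrow> a = b \<or> (a = None \<and> b \<in> {Some PHash, Some PUp, Some PDag})
     \<or> (a = Some PLin \<and> b \<in> {Some PHash, Some PDag}) \<or> (a \<in> {Some PDown, Some PUp, Some PHash} \<and> b = Some PDag)"

definition wenv :: "env \<Rightarrow> env \<Rightarrow> bool" where
  "wenv \<Gamma> \<Gamma>' \<longleftrightarrow> (\<forall>n. wk (\<Gamma> n) (\<Gamma>' n))"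

lemma wenv_refl[simp]: "wenv \<Gamma> \<Gamma>" by (simp add: wenv_def wk_def)

lemma wk_sp: "sp g g1 g2 \<Longrightarrow> wk g g' \<Longrightarrow>
   sp g' (if g' = g then g1 else g') (if g' = g then g2 else g') \<and> wk g1 (if g' = g then g1 else g') \<and> wk g2 (if g' = g then g2 else g')"
  unfolding sp_def wk_def by (auto split: option.splits if_splits)

lemma wenv_split: "app_split \<Gamma> \<Gamma>1 \<Gamma>2 \<Longrightarrow> wenv \<Gamma> \<Gamma>' \<Longrightarrow>
  \<exists>\<Gamma>1' \<Gamma>2'. app_split \<Gamma>' \<Gamma>1' \<Gamma>2' \<and> wenv \<Gamma>1 \<Gamma>1' \<and> wenv \<Gamma>2 \<Gamma>2'"
  unfolding app_split_sp wenv_def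
  apply (rule exI[of _ "\<lambda>n. if \<Gamma>' n = \<Gamma> n then \<Gamma>1 n else \<Gamma>' n"])
  apply (rule exI[of _ "\<lambda>n. if \<Gamma>' n = \<Gamma> n then \<Gamma>2 n else \<Gamma>' n"])
  using wk_sp by blast

lemma wk_mif: "wk c c' \<Longrightarrow> c' \<noteq> Some PLin \<Longrightarrow> wk (mif c) (mif c')"
  unfolding wk_def mif_def by (auto split: option.splits pat.splits)
lemma wk_mcf: "wk c c' \<Longrightarrow> c' \<noteq> Some PLin \<Longrightarrow> c' \<noteq> Some PDown \<Longrightarrow> wk (mcf c) (mcf c')"
  unfolding wk_def mcf_def by (auto split: option.splits pat.splits)
lemma wk_noLin: "wk c c' \<Longrightarrow> c \<noteq> Some PLin \<Longrightarrow> c' \<noteq> Some PLin"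
  unfolding wk_def by auto
lemma wk_noDown: "wk c c' \<Longrightarrow> c \<noteq> Some PDown \<Longrightarrow> c' \<noteq> Some PDown"
  unfolding wk_def by auto

lemma wenv_mi: "mi_env \<Gamma> G \<Longrightarrow> wenv \<Gamma> \<Gamma>' \<Longrightarrow> \<exists>G'. mi_env \<Gamma>' G' \<and> wenv G G'"
  unfolding mi_env_iff wenv_def
  apply (rule exI[of _ "\<lambda>n. mif (\<Gamma>' n)"])
  using wk_mif wk_noLin by blast

lemma wenv_mc: "mc_env \<Gamma> G \<Longrightarrow> wenv \<Gamma> \<Gamma>' \<Longrightarrow> \<exists>G'. mc_env \<Gamma>' G' \<and> wenv G G'"
  unfolding mc_env_iff wenv_def
  apply (rule exI[of _ "\<lambda>n. mcf (\<Gamma>' n)"])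
  using wk_mcf wk_noLin wk_noDown by blast

lemma wenv_ext: "wenv \<Gamma> \<Gamma>' \<Longrightarrow> wenv (ext p \<Gamma>) (ext p \<Gamma>')"
  unfolding wenv_def ext_def by (auto simp: wk_def split: nat.splits)

lemma wk_nl: "wk c c' \<Longrightarrow> nl c \<Longrightarrow> nl c'"
  unfolding wk_def nl_def by auto

lemma wenv_side: "side_ok n \<Gamma> \<Longrightarrow> wenv \<Gamma> \<Gamma>' \<Longrightarrow> side_ok n \<Gamma>'"
  unfolding side_ok_nl wenv_def using wk_nl by blast

lemma wk_var: "wk c c' \<Longrightarrow> c \<in> {Some PLin, Some PHash, Some PDag} \<Longrightarrow> c' \<in> {Some PLin, Some PHash, Some PDag}"
  unfolding wk_def by auto

lemma weaken_i: "ty_i ty \<Gamma> M \<Longrightarrow> wenv \<Gamma> \<Gamma>' \<Longrightarrow>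
   ty_i (\<lambda>\<Gamma>' M. (\<exists>\<Gamma>. ty \<Gamma> M \<and> wenv \<Gamma> \<Gamma>') \<or> ty \<Gamma>' M) \<Gamma>' M"
proof (induction arbitrary: \<Gamma>' rule: ty_i.induct)
  case (vl \<Gamma> n)
  have "wk (\<Gamma> n) (\<Gamma>' n)" using vl.prems wenv_def by blast
  from wk_var[OF this] have "\<Gamma>' n \<in> {Some PLin, Some PHash, Some PDag}" using vl.hyps by simp
  moreover have "side_ok n \<Gamma>'" using wenv_side vl.hyps vl.prems by blast
  ultimately show ?case by (simp add: ty_var_iff)
next
  case (vd \<Gamma> n)
  have "wk (\<Gamma> n) (\<Gamma>' n)" using vd.prems wenv_def by blast
  from wk_var[OF this] have "\<Gamma>' n \<in> {Some PLin, Some PHash, Some PDag}" using vd.hyps by simp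
  moreover have "side_ok n \<Gamma>'" using wenv_side vd.hyps vd.prems by blast
  ultimately show ?case by (simp add: ty_var_iff)
next
  case (va \<Gamma> n)
  have "wk (\<Gamma> n) (\<Gamma>' n)" using va.prems wenv_def by blast
  from wk_var[OF this] have "\<Gamma>' n \<in> {Some PLin, Some PHash, Some PDag}" using va.hyps by simp
  moreover have "side_ok n \<Gamma>'" using wenv_side va.hyps va.prems by blast
  ultimately show ?case by (simp add: ty_var_iff)
next
  case (a \<Gamma> \<Gamma>1 \<Gamma>2 M N)
  then obtain \<Gamma>1' \<Gamma>2' where "app_split \<Gamma>' \<Gamma>1' \<Gamma>2'" "wenv \<Gamma>1 \<Gamma>1'" "wenv \<Gamma>2 \<Gamma>2'" using wenv_split by blast
  then show ?case using a by (auto intro: ty_i.a)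
next
  case (ll \<Gamma> M) then show ?case by (auto intro: ty_i.intros wenv_ext)
next
  case (li1 \<Gamma> M) then show ?case by (auto intro: ty_i.intros wenv_ext)
next
  case (li2 \<Gamma> M) then show ?case by (auto intro: ty_i.intros wenv_ext)
next
  case (lc \<Gamma> M) then show ?case by (auto intro: ty_i.intros wenv_ext)
next
  case (mi \<Gamma> G M)
  then obtain G' where "mi_env \<Gamma>' G'" "wenv G G'" using wenv_mi by blast
  then show ?case using mi by (auto intro: ty_i.intros)
next
  case (mc \<Gamma> G M)
  then obtain G' where "mc_env \<Gamma>' G'" "wenv G G'" using wenv_mc by blast
  then show ?case using mc by (auto intro: ty_i.intros)
qed

lemma weaken: "ty \<Gamma> M \<Longrightarrow> wenv \<Gamma> \<Gamma>' \<Longrightarrow> ty \<Gamma>' M"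
proof (coinduction arbitrary: \<Gamma> \<Gamma>' M rule: ty.coinduct)
  case (ty \<Gamma> \<Gamma>' M)
  then show ?case using weaken_i[of \<Gamma> M \<Gamma>'] by (auto simp: ty_iff)
qed


lemma lift_var[simp]: "lift k (Var n) = Var (shift k n)" by (simp add: shift_def)
declare lift_simps(1)[simp del]
lemma subst_var_shift: "subst k B (Var (shift k m)) = Var m" by (auto simp: shift_def)
lemma ext_ins_Suc: "ext p (ins k c \<Gamma>) = ins (Suc k) c (ext p \<Gamma>)"
  by (simp add: ext_ins ins_ins0)
lemma mif_None[simp]: "mif None = None" and mcf_None[simp]: "mcf None = None"
  by (simp_all add: mif_def mcf_def)
lemma sp_None: "sp None c1 c2 \<longleftrightarrow> c1 = None \<and> c2 = None" by (simp add: sp_def)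
lemma nl_None[simp]: "nl None" by (simp add: nl_def)

lemma lift_i: "ty_i ty \<Gamma> M \<Longrightarrow>
  ty_i (\<lambda>G M'. (\<exists>\<Gamma> k M. G = ins k None \<Gamma> \<and> M' = lift k M \<and> ty \<Gamma> M) \<or> ty G M') (ins k None \<Gamma>) (lift k M)"
proof (induction arbitrary: k rule: ty_i.induct)
  case (vl \<Gamma> n) then show ?case by (simp add: lift_var ty_var_iff side_ok_ins_shift)
next
  case (vd \<Gamma> n) then show ?case by (simp add: lift_var ty_var_iff side_ok_ins_shift)
next
  case (va \<Gamma> n) then show ?case by (simp add: lift_var ty_var_iff side_ok_ins_shift)
next
  case (a \<Gamma> \<Gamma>1 \<Gamma>2 M N)
  have "app_split (ins k None \<Gamma>) (ins k None \<Gamma>1) (ins k None \<Gamma>2)" using a by (simp add: split_ins_iff sp_None)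
  then show ?case using a by (auto intro: ty_i.a)
next
  case (ll \<Gamma> M) then show ?case by (auto intro: ty_i.intros simp: ext_ins_Suc)
next
  case (li1 \<Gamma> M) then show ?case by (auto intro: ty_i.intros simp: ext_ins_Suc)
next
  case (li2 \<Gamma> M) then show ?case by (auto intro: ty_i.intros simp: ext_ins_Suc)
next
  case (lc \<Gamma> M) then show ?case by (auto intro: ty_i.intros simp: ext_ins_Suc)
next
  case (mi \<Gamma> G M)
  have "mi_env (ins k None \<Gamma>) (ins k None G)" using mi by (auto simp: mi_ins)
  then show ?case using mi by (auto intro: ty_i.intros)
next
  case (mc \<Gamma> G M)
  have "mc_env (ins k None \<Gamma>) (ins k None G)" using mc by (auto simp: mc_ins)
  then show ?case using mc by (auto intro: ty_i.intros)
qed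

lemma ty_lift: "ty \<Gamma> M \<Longrightarrow> ty (ins k None \<Gamma>) (lift k M)"
proof (coinduction arbitrary: \<Gamma> k M rule: ty.coinduct)
  case (ty \<Gamma> k M)
  then show ?case using lift_i[of \<Gamma> M k] by (auto simp: ty_iff)
qed

lemma strengthen_i: "ty_i ty G M \<Longrightarrow> G = ins k None \<Gamma> \<Longrightarrow>
  ty_i (\<lambda>\<Gamma> M'. (\<exists>k B M. M' = subst k B M \<and> ty (ins k None \<Gamma>) M) \<or> ty \<Gamma> M') \<Gamma> (subst k B M)"
proof (induction arbitrary: \<Gamma> k B rule: ty_i.induct)
  case (vl G n)
  then have "n \<noteq> k" by auto
  then obtain m where m: "n = shift k m" using shift_cases by blast
  show ?case using vl by (simp del: subst_simps(1) add: m subst_var_shift ty_var_iff side_ok_ins_shift)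
next
  case (vd G n)
  then have "n \<noteq> k" by auto
  then obtain m where m: "n = shift k m" using shift_cases by blast
  show ?case using vd by (simp del: subst_simps(1) add: m subst_var_shift ty_var_iff side_ok_ins_shift)
next
  case (va G n)
  then have "n \<noteq> k" by auto
  then obtain m where m: "n = shift k m" using shift_cases by blast
  show ?case using va by (simp del: subst_simps(1) add: m subst_var_shift ty_var_iff side_ok_ins_shift)
next
  case (a G G1 G2 M N)
  then obtain c1 c2 \<Gamma>1 \<Gamma>2 where "G1 = ins k c1 \<Gamma>1" "G2 = ins k c2 \<Gamma>2" "sp None c1 c2" "app_split \<Gamma> \<Gamma>1 \<Gamma>2"
    using split_ins by blast
  then show ?case using a by (auto intro!: ty_i.a simp: sp_None)
next
  case (ll G M) then show ?case by (auto intro: ty_i.intros simp: ext_ins_Suc)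
next
  case (li1 G M) then show ?case by (auto intro: ty_i.intros simp: ext_ins_Suc)
next
  case (li2 G M) then show ?case by (auto intro: ty_i.intros simp: ext_ins_Suc)
next
  case (lc G M) then show ?case by (auto intro: ty_i.intros simp: ext_ins_Suc)
next
  case (mi G G' M)
  then obtain G1 where "G' = ins k None G1" "mi_env \<Gamma> G1" by (auto simp: mi_ins)
  then show ?case using mi by (auto intro: ty_i.intros)
next
  case (mc G G' M)
  then obtain G1 where "G' = ins k None G1" "mc_env \<Gamma> G1" by (auto simp: mc_ins)
  then show ?case using mc by (auto intro: ty_i.intros)
qed

lemma strengthen: "ty (ins k None \<Gamma>) M \<Longrightarrow> ty \<Gamma> (subst k B M)"
proof (coinduction arbitrary: \<Gamma> k B M rule: ty.coinduct)
  case (ty \<Gamma> k B M)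
  then show ?case using strengthen_i[of "ins k None \<Gamma>" M k \<Gamma> B] by (auto simp: ty_iff)
qed


section \<open>Substitution lemmas for typing\<close>

lemma subst_var_k[simp]: "subst k B (Var k) = B" by simp

lemma sp_sym: "sp g a b \<longleftrightarrow> sp g b a"
  unfolding sp_def by (auto split: option.splits)

lemma app_split_sym: "app_split \<Gamma> \<Gamma>1 \<Gamma>2 \<longleftrightarrow> app_split \<Gamma> \<Gamma>2 \<Gamma>1"
  unfolding app_split_sp using sp_sym by blast

lemma sp_assoc: "sp g g1 d \<Longrightarrow> sp g1 a b \<Longrightarrow> sp (if a = None then d else a) a d \<and> sp g (if a = None then d else a) b"
  unfolding sp_def by (auto split: option.splits if_splits)

lemma split_assoc: "app_split \<Gamma> \<Gamma>1 \<Delta> \<Longrightarrow> app_split \<Gamma>1 \<Gamma>a \<Gamma>b \<Longrightarrow>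
  \<exists>\<Gamma>a'. app_split \<Gamma>a' \<Gamma>a \<Delta> \<and> app_split \<Gamma> \<Gamma>a' \<Gamma>b"
  unfolding app_split_sp
  apply (rule exI[of _ "\<lambda>n. if \<Gamma>a n = None then \<Delta> n else \<Gamma>a n"])
  using sp_assoc by blast

lemma split_assoc2: "app_split \<Gamma> \<Gamma>1 \<Delta> \<Longrightarrow> app_split \<Gamma>1 \<Gamma>a \<Gamma>b \<Longrightarrow>
  \<exists>\<Gamma>b'. app_split \<Gamma>b' \<Gamma>b \<Delta> \<and> app_split \<Gamma> \<Gamma>a \<Gamma>b'"
  using split_assoc[of \<Gamma> \<Gamma>1 \<Delta> \<Gamma>b \<Gamma>a] app_split_sym by blast

lemma sp_nl_eq: "sp g g1 d \<Longrightarrow> nl g1 \<Longrightarrow> g = d"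
  unfolding sp_def nl_def by (auto split: option.splits if_splits)

lemma split_nl_eq: "app_split \<Gamma> \<Gamma>1 \<Delta> \<Longrightarrow> \<forall>m. nl (\<Gamma>1 m) \<Longrightarrow> \<Gamma> = \<Delta>"
  unfolding app_split_sp using sp_nl_eq by blast

lemma wk_None_nl: "nl c \<Longrightarrow> wk None c" unfolding nl_def wk_def by auto

lemma ty_lift_nl: "ty \<Delta> B \<Longrightarrow> nl c \<Longrightarrow> ty (ins k c \<Delta>) (lift k B)"
proof -
  assume "ty \<Delta> B" "nl c"
  have "ty (ins k None \<Delta>) (lift k B)" using ty_lift \<open>ty \<Delta> B\<close> by blast
  moreover have "wenv (ins k None \<Delta>) (ins k c \<Delta>)"
    unfolding wenv_def ins_def using wk_None_nl[OF \<open>nl c\<close>] by (auto simp: wk_def)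
  ultimately show ?thesis using weaken by blast
qed

lemma sp_bind: "\<exists>c. nl c \<and> sp (Some p) (Some p) c"
  by (cases p) (auto simp: sp_def nl_def)

lemma bind_split: "app_split \<Gamma> \<Gamma>1 \<Delta> \<Longrightarrow> \<exists>c. nl c \<and> app_split (ext p \<Gamma>) (ext p \<Gamma>1) (ins 0 c \<Delta>)"
  using sp_bind[of p] by (auto simp: ext_ins split_ins_iff)

lemma sp_Lin: "sp (Some PLin) c1 c2 \<longleftrightarrow> (c1 = Some PLin \<and> c2 = None) \<or> (c1 = None \<and> c2 = Some PLin)"
  by (simp add: sp_def)
lemma sp_Down: "sp (Some PDown) c1 c2 \<longleftrightarrow> (c1 = Some PDown \<and> c2 = None) \<or> (c1 = None \<and> c2 = Some PDown)"
  by (simp add: sp_def)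
lemma sp_Hash: "sp (Some PHash) c1 c2 \<longleftrightarrow> c1 = Some PHash \<and> c2 = Some PHash"
  by (simp add: sp_def)
lemma sp_Up: "sp (Some PUp) c1 c2 \<longleftrightarrow> c1 = Some PUp \<and> c2 = Some PUp"
  by (simp add: sp_def)
lemma sp_Dag: "sp (Some PDag) c1 c2 \<longleftrightarrow> c1 = Some PDag \<and> c2 = Some PDag"
  by (simp add: sp_def)

lemma tyI_app: "app_split \<Gamma> \<Gamma>1 \<Gamma>2 \<Longrightarrow> ty \<Gamma>1 M \<Longrightarrow> ty \<Gamma>2 N \<Longrightarrow> ty \<Gamma> (App M N)"
  by (auto simp: ty_iff intro: ty_i.a)

lemma tyI_bind:
  "ty (ext PLin \<Gamma>) M \<Longrightarrow> ty \<Gamma> (Lam M)"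
  "ty (ext PHash \<Gamma>) M \<Longrightarrow> ty \<Gamma> (LamI M)"
  "ty (ext PDown \<Gamma>) M \<Longrightarrow> ty \<Gamma> (LamI M)"
  "ty (ext PUp \<Gamma>) M \<Longrightarrow> ty \<Gamma> (LamC M)"
  by (auto simp: ty_iff intro: ty_i.intros)

lemma tyI_mi: "mi_env \<Gamma> G \<Longrightarrow> ty G M \<Longrightarrow> ty \<Gamma> (BoxI M)"
  by (auto simp: ty_iff intro: ty_i.intros)
lemma tyI_mc: "mc_env \<Gamma> G \<Longrightarrow> ty G M \<Longrightarrow> ty \<Gamma> (BoxC M)"
  by (auto simp: ty_iff intro: ty_i.intros)

lemma subst_lin: "ty_i ty G A \<Longrightarrow> G = ins k (Some PLin) \<Gamma>1 \<Longrightarrow> ty \<Delta> B \<Longrightarrow> app_split \<Gamma> \<Gamma>1 \<Delta> \<Longrightarrow> ty \<Gamma> (subst k B A)"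
proof (induction arbitrary: \<Gamma>1 \<Gamma> \<Delta> B k rule: ty_i.induct)
  case (vl G n)
  show ?case
  proof (cases "n = k")
    case True
    then have "\<forall>m. nl (\<Gamma>1 m)" using vl side_ok_ins_k by blast
    then have "\<Gamma> = \<Delta>" using vl.prems(3) split_nl_eq by blast
    then show ?thesis using True vl.prems(2) by simp
  next
    case False
    then obtain m where "n = shift k m" using shift_cases by blast
    then show ?thesis using vl by (simp add: side_ok_ins_shift nl_def)
  qed
next
  case (vd G n)
  then have "n \<noteq> k" by auto
  then obtain m where "n = shift k m" using shift_cases by blast
  then show ?case using vd by (simp add: side_ok_ins_shift nl_def)
next
  case (va G n)
  then have "n \<noteq> k" by auto
  then obtain m where "n = shift k m" using shift_cases by blast
  then show ?case using va by (simp add: side_ok_ins_shift nl_def)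
next
  case (a G G1 G2 M N)
  have "app_split (ins k (Some PLin) \<Gamma>1) G1 G2" using a.hyps(1) a.prems(1) by simp
  then obtain c1 c2 \<Gamma>a \<Gamma>b where g: "G1 = ins k c1 \<Gamma>a" "G2 = ins k c2 \<Gamma>b" "sp (Some PLin) c1 c2" "app_split \<Gamma>1 \<Gamma>a \<Gamma>b"
    using split_ins by blast
  from g(3) show ?case unfolding sp_Lin
  proof (elim disjE conjE)
    assume c: "c1 = Some PLin" "c2 = None"
    obtain \<Gamma>a' where s: "app_split \<Gamma>a' \<Gamma>a \<Delta>" "app_split \<Gamma> \<Gamma>a' \<Gamma>b" using split_assoc a.prems(3) g(4) by blast
    have "ty \<Gamma>a' (subst k B M)" using a.IH(1)[OF _ a.prems(2) s(1)] g c by simp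
    moreover have "ty \<Gamma>b (subst k B N)" using strengthen ty.intros[OF a.hyps(3)] g c by simp
    ultimately show ?thesis using s tyI_app by simp
  next
    assume c: "c1 = None" "c2 = Some PLin"
    obtain \<Gamma>b' where s: "app_split \<Gamma>b' \<Gamma>b \<Delta>" "app_split \<Gamma> \<Gamma>a \<Gamma>b'" using split_assoc2 a.prems(3) g(4) by blast
    have "ty \<Gamma>b' (subst k B N)" using a.IH(2)[OF _ a.prems(2) s(1)] g c by simp
    moreover have "ty \<Gamma>a (subst k B M)" using strengthen ty.intros[OF a.hyps(2)] g c by simp
    ultimately show ?thesis using s tyI_app by simp
  qed
next
  case (ll G M)
  obtain c where c: "nl c" "app_split (ext PLin \<Gamma>) (ext PLin \<Gamma>1) (ins 0 c \<Delta>)" using bind_split ll.prems(3) by blast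
  have "ty (ext PLin \<Gamma>) (subst (Suc k) (lift 0 B) M)"
    using ll.IH[OF _ ty_lift_nl[OF ll.prems(2) c(1)] c(2)] ll.prems(1) by (simp add: ext_ins_Suc)
  then show ?case using tyI_bind by simp
next
  case (li1 G M)
  obtain c where c: "nl c" "app_split (ext PHash \<Gamma>) (ext PHash \<Gamma>1) (ins 0 c \<Delta>)" using bind_split li1.prems(3) by blast
  have "ty (ext PHash \<Gamma>) (subst (Suc k) (lift 0 B) M)"
    using li1.IH[OF _ ty_lift_nl[OF li1.prems(2) c(1)] c(2)] li1.prems(1) by (simp add: ext_ins_Suc)
  then show ?case using tyI_bind by simp
next
  case (li2 G M)
  obtain c where c: "nl c" "app_split (ext PDown \<Gamma>) (ext PDown \<Gamma>1) (ins 0 c \<Delta>)" using bind_split li2.prems(3) by blast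
  have "ty (ext PDown \<Gamma>) (subst (Suc k) (lift 0 B) M)"
    using li2.IH[OF _ ty_lift_nl[OF li2.prems(2) c(1)] c(2)] li2.prems(1) by (simp add: ext_ins_Suc)
  then show ?case using tyI_bind by simp
next
  case (lc G M)
  obtain c where c: "nl c" "app_split (ext PUp \<Gamma>) (ext PUp \<Gamma>1) (ins 0 c \<Delta>)" using bind_split lc.prems(3) by blast
  have "ty (ext PUp \<Gamma>) (subst (Suc k) (lift 0 B) M)"
    using lc.IH[OF _ ty_lift_nl[OF lc.prems(2) c(1)] c(2)] lc.prems(1) by (simp add: ext_ins_Suc)
  then show ?case using tyI_bind by simp
next
  case (mi G G' M) then show ?case by (simp add: mi_ins)
next
  case (mc G G' M) then show ?case by (simp add: mc_ins)
qed




definition hcp :: "pat option \<Rightarrow> pat option \<Rightarrow> pat option \<Rightarrow> bool" where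
  "hcp g1 d g \<longleftrightarrow> (d = None \<and> g = g1) \<or> (d \<noteq> None \<and> (g1 = None \<or> g1 = d) \<and> g = d)"

definition hc :: "env \<Rightarrow> env \<Rightarrow> env \<Rightarrow> bool" where
  "hc \<Gamma>1 \<Delta> \<Gamma> \<longleftrightarrow> (\<forall>n. hcp (\<Gamma>1 n) (\<Delta> n) (\<Gamma> n))"

lemma hcp_some: "hcp g1 d g \<Longrightarrow> g1 \<noteq> None \<Longrightarrow> g = g1"
  unfolding hcp_def by auto
lemma hcp_nl: "hcp g1 d g \<Longrightarrow> nl g1 \<Longrightarrow> nl d \<Longrightarrow> nl g"
  unfolding hcp_def by auto
lemma hcp_wk: "hcp g1 d g \<Longrightarrow> nl g1 \<Longrightarrow> nl d \<Longrightarrow> wk d g"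
  unfolding hcp_def nl_def wk_def by auto
lemma hcp_split: "hcp g1 d g \<Longrightarrow> sp g1 a b \<Longrightarrow> nl d \<Longrightarrow>
   hcp a d (if d = None then a else d) \<and> hcp b d (if d = None then b else d) \<and>
   sp g (if d = None then a else d) (if d = None then b else d)"
  unfolding hcp_def sp_def nl_def by (auto split: option.splits if_splits)
lemma hcp_mif: "hcp g1 d g \<Longrightarrow> nl d \<Longrightarrow> g1 \<noteq> Some PLin \<Longrightarrow> g \<noteq> Some PLin \<and> wk (mif g1) (mif g)"
  unfolding hcp_def nl_def wk_def mif_def by (auto split: option.splits pat.splits)
lemma hcp_mcf: "hcp g1 d g \<Longrightarrow> nl d \<Longrightarrow> g1 \<noteq> Some PLin \<Longrightarrow> g1 \<noteq> Some PDown \<Longrightarrow>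
    g \<noteq> Some PLin \<and> g \<noteq> Some PDown \<and> wk (mcf g1) (mcf g)"
  unfolding hcp_def nl_def wk_def mcf_def by (auto split: option.splits pat.splits)
lemma hcp_None: "hcp p None p" unfolding hcp_def by simp

lemma hc_ins: "hc (ins k c1 \<Gamma>1) (ins k d \<Delta>) (ins k g \<Gamma>) \<longleftrightarrow> hcp c1 d g \<and> hc \<Gamma>1 \<Delta> \<Gamma>"
  unfolding hc_def by (metis ins_k ins_shift shift_cases)

lemma hc_side: "hc \<Gamma>1 \<Delta> \<Gamma> \<Longrightarrow> \<forall>n. nl (\<Delta> n) \<Longrightarrow> side_ok m \<Gamma>1 \<Longrightarrow> side_ok m \<Gamma>"
  unfolding hc_def side_ok_nl using hcp_nl by blast

lemma nl_ins: "(\<forall>n. nl (ins k c \<Delta> n)) \<longleftrightarrow> nl c \<and> (\<forall>n. nl (\<Delta> n))"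
  by (metis ins_k ins_shift shift_cases)

lemma subst_hash: "ty_i ty G A \<Longrightarrow> G = ins k (Some PHash) \<Gamma>1 \<Longrightarrow> ty \<Delta> B \<Longrightarrow> \<forall>n. nl (\<Delta> n) \<Longrightarrow>
   hc \<Gamma>1 \<Delta> \<Gamma> \<Longrightarrow> ty \<Gamma> (subst k B A)"
proof (induction arbitrary: \<Gamma>1 \<Gamma> \<Delta> B k rule: ty_i.induct)
  case (vl G n)
  then have "n \<noteq> k" by auto
  then obtain m where m: "n = shift k m" using shift_cases by blast
  have g: "\<Gamma>1 m = Some PLin" using vl m by simp
  have "\<Gamma> m = \<Gamma>1 m" proof -
    have "hcp (\<Gamma>1 m) (\<Delta> m) (\<Gamma> m)" using vl.prems(4) unfolding hc_def by blast
    then show ?thesis using hcp_some g by simp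
  qed
  moreover have "side_ok m \<Gamma>" proof -
      have "side_ok m \<Gamma>1" using vl.hyps(2) vl.prems(1) m side_ok_ins_shift by simp
      then show ?thesis using hc_side vl.prems(3,4) by blast
    qed
  ultimately have "ty_i ty \<Gamma> (Var m)" using g by (simp add: ty_var_iff)
  then show ?case using m by (simp del: subst_simps(1) add: subst_var_shift ty_iff)
next
  case (vd G n)
  show ?case
  proof (cases "n = k")
    case True
    then have nl1: "\<forall>m. nl (\<Gamma>1 m)" using vd side_ok_ins_k by blast
    have "wenv \<Delta> \<Gamma>" unfolding wenv_def using vd.prems nl1 hcp_wk unfolding hc_def by blast
    then show ?thesis using True weaken vd.prems(2) by simp
  next
    case False
    then obtain m where m: "n = shift k m" using shift_cases by blast
    have g: "\<Gamma>1 m = Some PHash" using vd m by simp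
    have "\<Gamma> m = \<Gamma>1 m" proof -
    have "hcp (\<Gamma>1 m) (\<Delta> m) (\<Gamma> m)" using vd.prems(4) unfolding hc_def by blast
    then show ?thesis using hcp_some g by simp
  qed
    moreover have "side_ok m \<Gamma>" proof -
      have "side_ok m \<Gamma>1" using vd.hyps(2) vd.prems(1) m side_ok_ins_shift by simp
      then show ?thesis using hc_side vd.prems(3,4) by blast
    qed
    ultimately have "ty_i ty \<Gamma> (Var m)" using g by (simp add: ty_var_iff)
    then show ?thesis using m by (simp del: subst_simps(1) add: subst_var_shift ty_iff)
  qed
next
  case (va G n)
  then have "n \<noteq> k" by auto
  then obtain m where m: "n = shift k m" using shift_cases by blast
  have g: "\<Gamma>1 m = Some PDag" using va m by simp
  have "\<Gamma> m = \<Gamma>1 m" proof -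
    have "hcp (\<Gamma>1 m) (\<Delta> m) (\<Gamma> m)" using va.prems(4) unfolding hc_def by blast
    then show ?thesis using hcp_some g by simp
  qed
  moreover have "side_ok m \<Gamma>" proof -
      have "side_ok m \<Gamma>1" using va.hyps(2) va.prems(1) m side_ok_ins_shift by simp
      then show ?thesis using hc_side va.prems(3,4) by blast
    qed
  ultimately have "ty_i ty \<Gamma> (Var m)" using g by (simp add: ty_var_iff)
  then show ?case using m by (simp del: subst_simps(1) add: subst_var_shift ty_iff)
next
  case (a G G1 G2 M N)
  have "app_split (ins k (Some PHash) \<Gamma>1) G1 G2" using a.hyps(1) a.prems(1) by simp
  then obtain c1 c2 \<Gamma>a \<Gamma>b where g: "G1 = ins k c1 \<Gamma>a" "G2 = ins k c2 \<Gamma>b" "sp (Some PHash) c1 c2" "app_split \<Gamma>1 \<Gamma>a \<Gamma>b"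
    using split_ins by blast
  define \<Gamma>a' where "\<Gamma>a' = (\<lambda>n. if \<Delta> n = None then \<Gamma>a n else \<Delta> n)"
  define \<Gamma>b' where "\<Gamma>b' = (\<lambda>n. if \<Delta> n = None then \<Gamma>b n else \<Delta> n)"
  have pt: "hcp (\<Gamma>a n) (\<Delta> n) (\<Gamma>a' n) \<and> hcp (\<Gamma>b n) (\<Delta> n) (\<Gamma>b' n) \<and> sp (\<Gamma> n) (\<Gamma>a' n) (\<Gamma>b' n)" for n
  proof -
    have "hcp (\<Gamma>1 n) (\<Delta> n) (\<Gamma> n)" using a.prems(4) unfolding hc_def by blast
    moreover have "sp (\<Gamma>1 n) (\<Gamma>a n) (\<Gamma>b n)" using g(4) unfolding app_split_sp by blast
    moreover have "nl (\<Delta> n)" using a.prems(3) by blast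
    ultimately show ?thesis using hcp_split unfolding \<Gamma>a'_def \<Gamma>b'_def by presburger
  qed
  have h: "hc \<Gamma>a \<Delta> \<Gamma>a'" "hc \<Gamma>b \<Delta> \<Gamma>b'" "app_split \<Gamma> \<Gamma>a' \<Gamma>b'"
    using pt unfolding hc_def app_split_sp by blast+
  have "ty \<Gamma>a' (subst k B M)" using a.IH(1)[OF _ a.prems(2,3) h(1)] g sp_Hash by simp
  moreover have "ty \<Gamma>b' (subst k B N)" using a.IH(2)[OF _ a.prems(2,3) h(2)] g sp_Hash by simp
  ultimately show ?case using h(3) tyI_app by simp
next
  case (ll G M)
  have h: "hc (ext PLin \<Gamma>1) (ins 0 None \<Delta>) (ext PLin \<Gamma>)"
    unfolding ext_ins hc_ins using ll.prems(4) hcp_None by blast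
  have n: "\<forall>n. nl (ins 0 None \<Delta> n)" unfolding nl_ins using ll.prems(3) by simp
  have e: "ext PLin G = ins (Suc k) (Some PHash) (ext PLin \<Gamma>1)" using ll.prems(1) ext_ins_Suc by simp
  have "ty (ext PLin \<Gamma>) (subst (Suc k) (lift 0 B) M)"
    by (rule ll.IH[OF e ty_lift[OF ll.prems(2)] n h])
  then show ?case using tyI_bind by simp
next
  case (li1 G M)
  have h: "hc (ext PHash \<Gamma>1) (ins 0 None \<Delta>) (ext PHash \<Gamma>)"
    unfolding ext_ins hc_ins using li1.prems(4) hcp_None by blast
  have n: "\<forall>n. nl (ins 0 None \<Delta> n)" unfolding nl_ins using li1.prems(3) by simp
  have e: "ext PHash G = ins (Suc k) (Some PHash) (ext PHash \<Gamma>1)" using li1.prems(1) ext_ins_Suc by simp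
  have "ty (ext PHash \<Gamma>) (subst (Suc k) (lift 0 B) M)"
    by (rule li1.IH[OF e ty_lift[OF li1.prems(2)] n h])
  then show ?case using tyI_bind by simp
next
  case (li2 G M)
  have h: "hc (ext PDown \<Gamma>1) (ins 0 None \<Delta>) (ext PDown \<Gamma>)"
    unfolding ext_ins hc_ins using li2.prems(4) hcp_None by blast
  have n: "\<forall>n. nl (ins 0 None \<Delta> n)" unfolding nl_ins using li2.prems(3) by simp
  have e: "ext PDown G = ins (Suc k) (Some PHash) (ext PDown \<Gamma>1)" using li2.prems(1) ext_ins_Suc by simp
  have "ty (ext PDown \<Gamma>) (subst (Suc k) (lift 0 B) M)"
    by (rule li2.IH[OF e ty_lift[OF li2.prems(2)] n h])
  then show ?case using tyI_bind by simp
next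
  case (lc G M)
  have h: "hc (ext PUp \<Gamma>1) (ins 0 None \<Delta>) (ext PUp \<Gamma>)"
    unfolding ext_ins hc_ins using lc.prems(4) hcp_None by blast
  have n: "\<forall>n. nl (ins 0 None \<Delta> n)" unfolding nl_ins using lc.prems(3) by simp
  have e: "ext PUp G = ins (Suc k) (Some PHash) (ext PUp \<Gamma>1)" using lc.prems(1) ext_ins_Suc by simp
  have "ty (ext PUp \<Gamma>) (subst (Suc k) (lift 0 B) M)"
    by (rule lc.IH[OF e ty_lift[OF lc.prems(2)] n h])
  then show ?case using tyI_bind by simp
next
  case (mi G G' M)
  have "mi_env (ins k (Some PHash) \<Gamma>1) G'" using mi by simp
  then obtain G1 where g0: "G' = ins k (mif (Some PHash)) G1" "mi_env \<Gamma>1 G1" unfolding mi_ins by blast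
  have mh: "mif (Some PHash) = None" by (simp add: mif_def)
  have g: "G' = ins k None G1" "mi_env \<Gamma>1 G1" using g0 mh by simp_all
  have "ty (ins k None G1) M" using ty.intros[OF mi.hyps(2)] g(1) by simp
  then have "ty G1 (subst k B M)" by (rule strengthen)
  moreover have "\<Gamma> n \<noteq> Some PLin \<and> wk (mif (\<Gamma>1 n)) (mif (\<Gamma> n))" for n
  proof -
    have "hcp (\<Gamma>1 n) (\<Delta> n) (\<Gamma> n)" using mi.prems(4) unfolding hc_def by blast
    moreover have "\<Gamma>1 n \<noteq> Some PLin" using g(2) unfolding mi_env_iff by blast
    ultimately show ?thesis using hcp_mif mi.prems(3) by blast
  qed
  then have "mi_env \<Gamma> (\<lambda>n. mif (\<Gamma> n)) \<and> wenv G1 (\<lambda>n. mif (\<Gamma> n))"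
    using g(2) unfolding mi_env_iff wenv_def by simp
  ultimately show ?case using weaken[of G1 "subst k B M" "\<lambda>n. mif (\<Gamma> n)"] tyI_mi[of \<Gamma> "\<lambda>n. mif (\<Gamma> n)"] by simp
next
  case (mc G G' M)
  have "mc_env (ins k (Some PHash) \<Gamma>1) G'" using mc by simp
  then obtain G1 where g0: "G' = ins k (mcf (Some PHash)) G1" "mc_env \<Gamma>1 G1" unfolding mc_ins by blast
  have mh: "mcf (Some PHash) = None" by (simp add: mcf_def)
  have g: "G' = ins k None G1" "mc_env \<Gamma>1 G1" using g0 mh by simp_all
  have "ty (ins k None G1) M" using mc.hyps(2) g(1) by simp
  then have "ty G1 (subst k B M)" by (rule strengthen)
  moreover have "\<Gamma> n \<noteq> Some PLin \<and> \<Gamma> n \<noteq> Some PDown \<and> wk (mcf (\<Gamma>1 n)) (mcf (\<Gamma> n))" for n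
  proof -
    have "hcp (\<Gamma>1 n) (\<Delta> n) (\<Gamma> n)" using mc.prems(4) unfolding hc_def by blast
    moreover have "\<Gamma>1 n \<noteq> Some PLin" "\<Gamma>1 n \<noteq> Some PDown" using g(2) unfolding mc_env_iff by blast+
    ultimately show ?thesis using hcp_mcf mc.prems(3) by blast
  qed
  then have "mc_env \<Gamma> (\<lambda>n. mcf (\<Gamma> n)) \<and> wenv G1 (\<lambda>n. mcf (\<Gamma> n))"
    using g(2) unfolding mc_env_iff wenv_def by simp
  ultimately show ?case using weaken[of G1 "subst k B M" "\<lambda>n. mcf (\<Gamma> n)"] tyI_mc[of \<Gamma> "\<lambda>n. mcf (\<Gamma> n)"] by simp
qed


lemma nl_mif: "nl c \<Longrightarrow> nl (mif c)" unfolding nl_def mif_def by (auto split: option.splits pat.splits)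
lemma nl_mcf: "nl (mcf c)" unfolding nl_def mcf_def by (auto split: option.splits pat.splits)
lemma mcf_mif: "mcf (mif c) = mcf c" unfolding mif_def mcf_def by (auto split: option.splits pat.splits)
lemma sp_mif: "sp g g1 g2 \<Longrightarrow> g1 \<noteq> Some PLin \<Longrightarrow> g2 \<noteq> Some PLin \<Longrightarrow> g \<noteq> Some PLin \<and> sp (mif g) (mif g1) (mif g2)"
  unfolding sp_def mif_def by (auto split: option.splits pat.splits if_splits)
lemma sp_mcf: "sp g a b \<Longrightarrow> mcf a = mcf g \<and> mcf b = mcf g"
  unfolding sp_def mcf_def by (auto split: option.splits pat.splits if_splits)

lemma subst_down: "ty_i ty G A \<Longrightarrow> G = ins k (Some PDown) \<Gamma>1 \<Longrightarrow> ty \<Delta> B \<Longrightarrow> app_split \<Gamma> \<Gamma>1 \<Gamma>2 \<Longrightarrow>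
  mi_env \<Gamma>2 \<Delta> \<Longrightarrow> ty \<Gamma> (subst k B A)"
proof (induction arbitrary: \<Gamma>1 \<Gamma> \<Gamma>2 \<Delta> B k rule: ty_i.induct)
  case (vl G n)
  then have "n \<noteq> k" by auto
  then obtain m where "n = shift k m" using shift_cases by blast
  then show ?case using vl by (simp add: side_ok_ins_shift nl_def)
next
  case (vd G n)
  then have "n \<noteq> k" by auto
  then obtain m where "n = shift k m" using shift_cases by blast
  then show ?case using vd by (simp add: side_ok_ins_shift nl_def)
next
  case (va G n)
  then have "n \<noteq> k" by auto
  then obtain m where "n = shift k m" using shift_cases by blast
  then show ?case using va by (simp add: side_ok_ins_shift nl_def)
next
  case (a G G1 G2 M N)
  have "app_split (ins k (Some PDown) \<Gamma>1) G1 G2" using a.hyps(1) a.prems(1) by simp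
  then obtain c1 c2 \<Gamma>a \<Gamma>b where g: "G1 = ins k c1 \<Gamma>a" "G2 = ins k c2 \<Gamma>b" "sp (Some PDown) c1 c2" "app_split \<Gamma>1 \<Gamma>a \<Gamma>b"
    using split_ins by blast
  from g(3) show ?case unfolding sp_Down
  proof (elim disjE conjE)
    assume c: "c1 = Some PDown" "c2 = None"
    obtain \<Gamma>a' where s: "app_split \<Gamma>a' \<Gamma>a \<Gamma>2" "app_split \<Gamma> \<Gamma>a' \<Gamma>b" using split_assoc a.prems(3) g(4) by blast
    have "ty \<Gamma>a' (subst k B M)" using a.IH(1)[OF _ a.prems(2) s(1) a.prems(4)] g c by simp
    moreover have "ty \<Gamma>b (subst k B N)" using strengthen ty.intros[OF a.hyps(3)] g c by simp
    ultimately show ?thesis using s tyI_app by simp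
  next
    assume c: "c1 = None" "c2 = Some PDown"
    obtain \<Gamma>b' where s: "app_split \<Gamma>b' \<Gamma>b \<Gamma>2" "app_split \<Gamma> \<Gamma>a \<Gamma>b'" using split_assoc2 a.prems(3) g(4) by blast
    have "ty \<Gamma>b' (subst k B N)" using a.IH(2)[OF _ a.prems(2) s(1) a.prems(4)] g c by simp
    moreover have "ty \<Gamma>a (subst k B M)" using strengthen ty.intros[OF a.hyps(2)] g c by simp
    ultimately show ?thesis using s tyI_app by simp
  qed
next
  case (ll G M)
  obtain c where c: "nl c" "app_split (ext PLin \<Gamma>) (ext PLin \<Gamma>1) (ins 0 c \<Gamma>2)" using bind_split ll.prems(3) by blast
  have m: "mi_env (ins 0 c \<Gamma>2) (ins 0 (mif c) \<Delta>)" using ll.prems(4) c(1) unfolding mi_ins nl_def by auto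
  have t: "ty (ins 0 (mif c) \<Delta>) (lift 0 B)" using ty_lift_nl[OF ll.prems(2)] nl_mif[OF c(1)] by blast
  have e: "ext PLin G = ins (Suc k) (Some PDown) (ext PLin \<Gamma>1)" using ll.prems(1) ext_ins_Suc by simp
  have "ty (ext PLin \<Gamma>) (subst (Suc k) (lift 0 B) M)"
    by (rule ll.IH[OF e t c(2) m])
  then show ?case using tyI_bind by simp
next
  case (li1 G M)
  obtain c where c: "nl c" "app_split (ext PHash \<Gamma>) (ext PHash \<Gamma>1) (ins 0 c \<Gamma>2)" using bind_split li1.prems(3) by blast
  have m: "mi_env (ins 0 c \<Gamma>2) (ins 0 (mif c) \<Delta>)" using li1.prems(4) c(1) unfolding mi_ins nl_def by auto
  have t: "ty (ins 0 (mif c) \<Delta>) (lift 0 B)" using ty_lift_nl[OF li1.prems(2)] nl_mif[OF c(1)] by blast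
  have e: "ext PHash G = ins (Suc k) (Some PDown) (ext PHash \<Gamma>1)" using li1.prems(1) ext_ins_Suc by simp
  have "ty (ext PHash \<Gamma>) (subst (Suc k) (lift 0 B) M)"
    by (rule li1.IH[OF e t c(2) m])
  then show ?case using tyI_bind by simp
next
  case (li2 G M)
  obtain c where c: "nl c" "app_split (ext PDown \<Gamma>) (ext PDown \<Gamma>1) (ins 0 c \<Gamma>2)" using bind_split li2.prems(3) by blast
  have m: "mi_env (ins 0 c \<Gamma>2) (ins 0 (mif c) \<Delta>)" using li2.prems(4) c(1) unfolding mi_ins nl_def by auto
  have t: "ty (ins 0 (mif c) \<Delta>) (lift 0 B)" using ty_lift_nl[OF li2.prems(2)] nl_mif[OF c(1)] by blast
  have e: "ext PDown G = ins (Suc k) (Some PDown) (ext PDown \<Gamma>1)" using li2.prems(1) ext_ins_Suc by simp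
  have "ty (ext PDown \<Gamma>) (subst (Suc k) (lift 0 B) M)"
    by (rule li2.IH[OF e t c(2) m])
  then show ?case using tyI_bind by simp
next
  case (lc G M)
  obtain c where c: "nl c" "app_split (ext PUp \<Gamma>) (ext PUp \<Gamma>1) (ins 0 c \<Gamma>2)" using bind_split lc.prems(3) by blast
  have m: "mi_env (ins 0 c \<Gamma>2) (ins 0 (mif c) \<Delta>)" using lc.prems(4) c(1) unfolding mi_ins nl_def by auto
  have t: "ty (ins 0 (mif c) \<Delta>) (lift 0 B)" using ty_lift_nl[OF lc.prems(2)] nl_mif[OF c(1)] by blast
  have e: "ext PUp G = ins (Suc k) (Some PDown) (ext PUp \<Gamma>1)" using lc.prems(1) ext_ins_Suc by simp
  have "ty (ext PUp \<Gamma>) (subst (Suc k) (lift 0 B) M)"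
    by (rule lc.IH[OF e t c(2) m])
  then show ?case using tyI_bind by simp
next
  case (mi G G' M)
  have "mi_env (ins k (Some PDown) \<Gamma>1) G'" using mi by simp
  then obtain G1 where g0: "G' = ins k (mif (Some PDown)) G1" "mi_env \<Gamma>1 G1" unfolding mi_ins by blast
  have mh: "mif (Some PDown) = Some PLin" by (simp add: mif_def)
  have g: "G' = ins k (Some PLin) G1" using g0 mh by simp
  have pt: "\<Gamma> n \<noteq> Some PLin \<and> sp (mif (\<Gamma> n)) (G1 n) (\<Delta> n)" for n
  proof -
    have "sp (\<Gamma> n) (\<Gamma>1 n) (\<Gamma>2 n)" using mi.prems(3) unfolding app_split_sp by blast
    moreover have "\<Gamma>1 n \<noteq> Some PLin" "G1 n = mif (\<Gamma>1 n)" using g0(2) unfolding mi_env_iff by auto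
    moreover have "\<Gamma>2 n \<noteq> Some PLin" "\<Delta> n = mif (\<Gamma>2 n)" using mi.prems(4) unfolding mi_env_iff by auto
    ultimately show ?thesis using sp_mif by metis
  qed
  have s: "app_split (\<lambda>n. mif (\<Gamma> n)) G1 \<Delta>" using pt unfolding app_split_sp by blast
  have "ty (\<lambda>n. mif (\<Gamma> n)) (subst k B M)" by (rule subst_lin[OF mi.hyps(2) g mi.prems(2) s])
  moreover have "mi_env \<Gamma> (\<lambda>n. mif (\<Gamma> n))" using pt unfolding mi_env_iff by blast
  ultimately show ?case using tyI_mi by simp
next
  case (mc G G' M) then show ?case by (simp add: mc_ins)
qed

lemma subst_dag_i: "ty_i ty G A \<Longrightarrow> G = ins k (Some PDag) E \<Longrightarrow> ty D B \<Longrightarrow> \<forall>n. D n \<in> {None, Some PDag} \<Longrightarrow>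
  \<forall>n. D n \<noteq> None \<longrightarrow> E n = D n \<Longrightarrow>
  ty_i (\<lambda>E M'. (\<exists>k A B D. M' = subst k B A \<and> ty (ins k (Some PDag) E) A \<and> ty D B \<and>
      (\<forall>n. D n \<in> {None, Some PDag}) \<and> (\<forall>n. D n \<noteq> None \<longrightarrow> E n = D n)) \<or> ty E M') E (subst k B A)"
  (is "_ \<Longrightarrow> _ \<Longrightarrow> _ \<Longrightarrow> _ \<Longrightarrow> _ \<Longrightarrow> ty_i ?R E _")
proof (induction arbitrary: E D B k rule: ty_i.induct)
  case (vl G n)
  then have "n \<noteq> k" by auto
  then obtain m where m: "n = shift k m" using shift_cases by blast
  then show ?case using vl by (simp del: subst_simps(1) add: subst_var_shift ty_var_iff side_ok_ins_shift)
next
  case (vd G n)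
  then have "n \<noteq> k" by auto
  then obtain m where m: "n = shift k m" using shift_cases by blast
  then show ?case using vd by (simp del: subst_simps(1) add: subst_var_shift ty_var_iff side_ok_ins_shift)
next
  case (va G n)
  show ?case
  proof (cases "n = k")
    case True
    then have nl1: "\<forall>m. nl (E m)" using va side_ok_ins_k by blast
    have "wenv D E" unfolding wenv_def
    proof
      fix n show "wk (D n) (E n)" using va.prems(3,4) nl1 wk_None_nl[of "E n"] by (cases "D n = None") (auto simp: wk_def)
    qed
    then have "ty E B" using weaken va.prems(2) by blast
    then show ?thesis using True by (auto simp: ty_iff intro: ty_i_mono')
  next
    case False
    then obtain m where m: "n = shift k m" using shift_cases by blast
    then show ?thesis using va by (simp del: subst_simps(1) add: subst_var_shift ty_var_iff side_ok_ins_shift)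
  qed
next
  case (a G G1 G2 M N)
  have "app_split (ins k (Some PDag) E) G1 G2" using a.hyps(1) a.prems(1) by simp
  then obtain c1 c2 Ea Eb where g: "G1 = ins k c1 Ea" "G2 = ins k c2 Eb" "sp (Some PDag) c1 c2" "app_split E Ea Eb"
    using split_ins by blast
  have pt: "(D n \<noteq> None \<longrightarrow> Ea n = D n) \<and> (D n \<noteq> None \<longrightarrow> Eb n = D n)" for n
  proof -
    have "sp (E n) (Ea n) (Eb n)" using g(4) unfolding app_split_sp by blast
    then show ?thesis using a.prems(3,4) sp_Dag by (metis insertE empty_iff)
  qed
  have "ty_i ?R Ea (subst k B M)" using a.IH(1)[OF _ a.prems(2,3)] g sp_Dag pt by simp
  moreover have "ty_i ?R Eb (subst k B N)" using a.IH(2)[OF _ a.prems(2,3)] g sp_Dag pt by simp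
  ultimately show ?case using g(4) by (auto intro: ty_i.a)
next
  case (ll G M)
  have e: "ext PLin G = ins (Suc k) (Some PDag) (ext PLin E)" using ll.prems(1) ext_ins_Suc by simp
  have d1: "\<forall>n. ins 0 None D n \<in> {None, Some PDag}" using ll.prems(3) unfolding all_ins[where P="\<lambda>x n. x \<in> {None, Some PDag}"] by simp
  have d2: "\<forall>n. ins 0 None D n \<noteq> None \<longrightarrow> ext PLin E n = ins 0 None D n"
    using ll.prems(4) unfolding ext_ins ins_def by auto
  have "ty_i ?R (ext PLin E) (subst (Suc k) (lift 0 B) M)"
    by (rule ll.IH[OF e ty_lift[OF ll.prems(2)] d1 d2])
  then show ?case by (auto intro: ty_i.intros)
next
  case (li1 G M)
  have e: "ext PHash G = ins (Suc k) (Some PDag) (ext PHash E)" using li1.prems(1) ext_ins_Suc by simp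
  have d1: "\<forall>n. ins 0 None D n \<in> {None, Some PDag}" using li1.prems(3) unfolding all_ins[where P="\<lambda>x n. x \<in> {None, Some PDag}"] by simp
  have d2: "\<forall>n. ins 0 None D n \<noteq> None \<longrightarrow> ext PHash E n = ins 0 None D n"
    using li1.prems(4) unfolding ext_ins ins_def by auto
  have "ty_i ?R (ext PHash E) (subst (Suc k) (lift 0 B) M)"
    by (rule li1.IH[OF e ty_lift[OF li1.prems(2)] d1 d2])
  then show ?case by (auto intro: ty_i.intros)
next
  case (li2 G M)
  have e: "ext PDown G = ins (Suc k) (Some PDag) (ext PDown E)" using li2.prems(1) ext_ins_Suc by simp
  have d1: "\<forall>n. ins 0 None D n \<in> {None, Some PDag}" using li2.prems(3) unfolding all_ins[where P="\<lambda>x n. x \<in> {None, Some PDag}"] by simp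
  have d2: "\<forall>n. ins 0 None D n \<noteq> None \<longrightarrow> ext PDown E n = ins 0 None D n"
    using li2.prems(4) unfolding ext_ins ins_def by auto
  have "ty_i ?R (ext PDown E) (subst (Suc k) (lift 0 B) M)"
    by (rule li2.IH[OF e ty_lift[OF li2.prems(2)] d1 d2])
  then show ?case by (auto intro: ty_i.intros)
next
  case (lc G M)
  have e: "ext PUp G = ins (Suc k) (Some PDag) (ext PUp E)" using lc.prems(1) ext_ins_Suc by simp
  have d1: "\<forall>n. ins 0 None D n \<in> {None, Some PDag}" using lc.prems(3) unfolding all_ins[where P="\<lambda>x n. x \<in> {None, Some PDag}"] by simp
  have d2: "\<forall>n. ins 0 None D n \<noteq> None \<longrightarrow> ext PUp E n = ins 0 None D n"
    using lc.prems(4) unfolding ext_ins ins_def by auto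
  have "ty_i ?R (ext PUp E) (subst (Suc k) (lift 0 B) M)"
    by (rule lc.IH[OF e ty_lift[OF lc.prems(2)] d1 d2])
  then show ?case by (auto intro: ty_i.intros)
next
  case (mi G G' M)
  have "mi_env (ins k (Some PDag) E) G'" using mi by simp
  then obtain G1 where g0: "G' = ins k (mif (Some PDag)) G1" "mi_env E G1" unfolding mi_ins by blast
  have g: "G' = ins k (Some PDag) G1" using g0 by (simp add: mif_def)
  have "\<forall>n. D n \<noteq> None \<longrightarrow> G1 n = D n"
  proof (intro allI impI)
    fix n assume "D n \<noteq> None"
    moreover have "D n \<in> {None, Some PDag}" using mi.prems(3) by blast
    ultimately have d: "D n = Some PDag" by auto
    then have "E n = Some PDag" using mi.prems(4) by simp
    note d this
    then show "G1 n = D n" using g0(2) unfolding mi_env_iff by (simp add: mif_def)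
  qed
  then have "ty_i ?R G1 (subst k B M)" using mi.IH[OF g mi.prems(2,3)] by blast
  then show ?case using g0(2) by (auto intro: ty_i.intros)
next
  case (mc G G' M)
  have "mc_env (ins k (Some PDag) E) G'" using mc by simp
  then obtain G1 where g0: "G' = ins k (mcf (Some PDag)) G1" "mc_env E G1" unfolding mc_ins by blast
  have g: "G' = ins k (Some PDag) G1" using g0 by (simp add: mcf_def)
  have "\<forall>n. D n \<noteq> None \<longrightarrow> G1 n = D n"
  proof (intro allI impI)
    fix n assume "D n \<noteq> None"
    moreover have "D n \<in> {None, Some PDag}" using mc.prems(3) by blast
    ultimately have d: "D n = Some PDag" by auto
    then have "E n = Some PDag" using mc.prems(4) by simp
    note d this
    then show "G1 n = D n" using g0(2) unfolding mc_env_iff by (simp add: mcf_def)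
  qed
  then have r: "?R G1 (subst k B M)" using mc.hyps g mc.prems(2,3) by blast
  show ?case unfolding subst_simps by (rule ty_i.mc[where X="?R", OF g0(2) r])
qed

lemma subst_dag: "ty (ins k (Some PDag) E) A \<Longrightarrow> ty D B \<Longrightarrow> \<forall>n. D n \<in> {None, Some PDag} \<Longrightarrow>
  \<forall>n. D n \<noteq> None \<longrightarrow> E n = D n \<Longrightarrow> ty E (subst k B A)"
proof (coinduction arbitrary: E k A B D rule: ty.coinduct)
  case (ty E k A B D)
  then show ?case using subst_dag_i[of "ins k (Some PDag) E" A k E D B] by (auto simp: ty_iff)
qed

lemma subst_up: "ty_i ty G A \<Longrightarrow> G = ins k (Some PUp) \<Gamma> \<Longrightarrow> ty (\<lambda>n. mcf (\<Gamma> n)) B \<Longrightarrow> ty \<Gamma> (subst k B A)"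
proof (induction arbitrary: \<Gamma> B k rule: ty_i.induct)
  case (vl G n)
  then have "n \<noteq> k" by auto
  then obtain m where "n = shift k m" using shift_cases by blast
  then show ?case using vl by (simp del: subst_simps(1) add: subst_var_shift ty_var_iff side_ok_ins_shift ty_iff nl_def)
next
  case (vd G n)
  then have "n \<noteq> k" by auto
  then obtain m where "n = shift k m" using shift_cases by blast
  then show ?case using vd by (simp del: subst_simps(1) add: subst_var_shift ty_var_iff side_ok_ins_shift ty_iff nl_def)
next
  case (va G n)
  then have "n \<noteq> k" by auto
  then obtain m where "n = shift k m" using shift_cases by blast
  then show ?case using va by (simp del: subst_simps(1) add: subst_var_shift ty_var_iff side_ok_ins_shift ty_iff nl_def)
next
  case (a G G1 G2 M N)
  have "app_split (ins k (Some PUp) \<Gamma>) G1 G2" using a.hyps(1) a.prems(1) by simp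
  then obtain c1 c2 \<Gamma>a \<Gamma>b where g: "G1 = ins k c1 \<Gamma>a" "G2 = ins k c2 \<Gamma>b" "sp (Some PUp) c1 c2" "app_split \<Gamma> \<Gamma>a \<Gamma>b"
    using split_ins by blast
  have eq: "(\<lambda>n. mcf (\<Gamma>a n)) = (\<lambda>n. mcf (\<Gamma> n))" "(\<lambda>n. mcf (\<Gamma>b n)) = (\<lambda>n. mcf (\<Gamma> n))"
    using g(4) sp_mcf unfolding app_split_sp by (auto simp: fun_eq_iff)
  have c: "G1 = ins k (Some PUp) \<Gamma>a" "G2 = ins k (Some PUp) \<Gamma>b" using g sp_Up by simp_all
  have "ty \<Gamma>a (subst k B M)" using a.IH(1)[OF c(1)] a.prems(2) eq by simp
  moreover have "ty \<Gamma>b (subst k B N)" using a.IH(2)[OF c(2)] a.prems(2) eq by simp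
  ultimately show ?case using g(4) tyI_app by simp
next
  case (ll G M)
  have e: "ext PLin G = ins (Suc k) (Some PUp) (ext PLin \<Gamma>)" using ll.prems(1) ext_ins_Suc by simp
  have t: "ty (\<lambda>n. mcf (ext PLin \<Gamma> n)) (lift 0 B)"
    unfolding ext_ins ins_comp using ty_lift_nl[OF ll.prems(2) nl_mcf] by blast
  have "ty (ext PLin \<Gamma>) (subst (Suc k) (lift 0 B) M)"
    by (rule ll.IH[OF e t])
  then show ?case using tyI_bind by simp
next
  case (li1 G M)
  have e: "ext PHash G = ins (Suc k) (Some PUp) (ext PHash \<Gamma>)" using li1.prems(1) ext_ins_Suc by simp
  have t: "ty (\<lambda>n. mcf (ext PHash \<Gamma> n)) (lift 0 B)"
    unfolding ext_ins ins_comp using ty_lift_nl[OF li1.prems(2) nl_mcf] by blast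
  have "ty (ext PHash \<Gamma>) (subst (Suc k) (lift 0 B) M)"
    by (rule li1.IH[OF e t])
  then show ?case using tyI_bind by simp
next
  case (li2 G M)
  have e: "ext PDown G = ins (Suc k) (Some PUp) (ext PDown \<Gamma>)" using li2.prems(1) ext_ins_Suc by simp
  have t: "ty (\<lambda>n. mcf (ext PDown \<Gamma> n)) (lift 0 B)"
    unfolding ext_ins ins_comp using ty_lift_nl[OF li2.prems(2) nl_mcf] by blast
  have "ty (ext PDown \<Gamma>) (subst (Suc k) (lift 0 B) M)"
    by (rule li2.IH[OF e t])
  then show ?case using tyI_bind by simp
next
  case (lc G M)
  have e: "ext PUp G = ins (Suc k) (Some PUp) (ext PUp \<Gamma>)" using lc.prems(1) ext_ins_Suc by simp
  have t: "ty (\<lambda>n. mcf (ext PUp \<Gamma> n)) (lift 0 B)"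
    unfolding ext_ins ins_comp using ty_lift_nl[OF lc.prems(2) nl_mcf] by blast
  have "ty (ext PUp \<Gamma>) (subst (Suc k) (lift 0 B) M)"
    by (rule lc.IH[OF e t])
  then show ?case using tyI_bind by simp
next
  case (mi G G' M)
  have "mi_env (ins k (Some PUp) \<Gamma>) G'" using mi by simp
  then obtain G1 where g0: "G' = ins k (mif (Some PUp)) G1" "mi_env \<Gamma> G1" unfolding mi_ins by blast
  have g: "G' = ins k (Some PUp) G1" using g0 by (simp add: mif_def)
  have "(\<lambda>n. mcf (G1 n)) = (\<lambda>n. mcf (\<Gamma> n))" using g0(2) unfolding mi_env_iff by (simp add: mcf_mif)
  then have "ty G1 (subst k B M)" using mi.IH[OF g] mi.prems(2) by simp
  then show ?case using g0(2) tyI_mi by simp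
next
  case (mc G G' M)
  have "mc_env (ins k (Some PUp) \<Gamma>) G'" using mc by simp
  then obtain G1 where g0: "G' = ins k (mcf (Some PUp)) G1" "mc_env \<Gamma> G1" unfolding mc_ins by blast
  have g: "G' = ins k (Some PDag) G1" using g0 by (simp add: mcf_def)
  have G1: "G1 = (\<lambda>n. mcf (\<Gamma> n))" using g0(2) unfolding mc_env_iff by simp
  have "ty G1 (subst k B M)"
    apply (rule subst_dag[of k G1 M "\<lambda>n. mcf (\<Gamma> n)" B])
    using mc.hyps(2) g mc.prems(2) G1 by (auto simp: mcf_def split: option.splits pat.splits)
  then show ?case using g0(2) tyI_mc by simp
qed




section \<open>Subject reduction\<close>

definition dpt :: "pat option \<Rightarrow> pat option \<Rightarrow> bool" where
  "dpt g g' \<longleftrightarrow> g' = g \<or> (g = Some PDown \<and> g' = Some PHash)"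

definition denv :: "env \<Rightarrow> env \<Rightarrow> bool" where
  "denv \<Gamma> \<Gamma>' \<longleftrightarrow> (\<forall>n. dpt (\<Gamma> n) (\<Gamma>' n))"

lemma denv_refl[simp]: "denv \<Gamma> \<Gamma>" by (simp add: denv_def dpt_def)

definition hsh :: "pat option \<Rightarrow> pat option" where
  "hsh c = (if c = Some PLin then Some PHash else c)"

lemma li1_pt: "sp g g1 g2 \<Longrightarrow> g2 \<noteq> Some PLin \<Longrightarrow>
  nl (hsh (mif g2)) \<and> wk (mif g2) (hsh (mif g2)) \<and>
  hcp g1 (hsh (mif g2)) (if hsh (mif g2) = None then g1 else hsh (mif g2)) \<and>
  dpt g (if hsh (mif g2) = None then g1 else hsh (mif g2))"
  unfolding sp_def nl_def wk_def hcp_def dpt_def hsh_def mif_def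
  by (auto split: option.splits pat.splits if_splits)

lemma lc_pt: "sp g g1 g2 \<Longrightarrow> g2 \<noteq> Some PLin \<Longrightarrow> g2 \<noteq> Some PDown \<Longrightarrow> g1 = g \<and> mcf g2 = mcf g"
  unfolding sp_def mcf_def by (auto split: option.splits pat.splits if_splits)

lemma sr_basic: "basic R C \<Longrightarrow> ty \<Gamma> R \<Longrightarrow> \<exists>\<Gamma>'. denv \<Gamma> \<Gamma>' \<and> ty \<Gamma>' C"
proof (induction rule: basic.induct)
  case (1 A B)
  have "ty_i ty \<Gamma> (App (Lam A) B)" using 1 ty_iff by blast
  then obtain \<Gamma>1 \<Gamma>2 where h: "app_split \<Gamma> \<Gamma>1 \<Gamma>2" "ty_i ty \<Gamma>1 (Lam A)" "ty_i ty \<Gamma>2 B"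
    by (rule tyAppE)
  from h(2) have "ty_i ty (ins 0 (Some PLin) \<Gamma>1) A" by (auto elim: tyLamE simp: ext_ins)
  from subst_lin[OF this refl ty.intros[OF h(3)] h(1)] show ?case using denv_refl by blast
next
  case (2 A B)
  have "ty_i ty \<Gamma> (App (LamI A) (BoxI B))" using 2 ty_iff by blast
  then obtain \<Gamma>1 \<Gamma>2 where h: "app_split \<Gamma> \<Gamma>1 \<Gamma>2" "ty_i ty \<Gamma>1 (LamI A)" "ty_i ty \<Gamma>2 (BoxI B)"
    by (rule tyAppE)
  from h(3) obtain G2 where g: "mi_env \<Gamma>2 G2" "ty_i ty G2 B" by (auto elim: tyBoxIE)
  have "ty_i ty (ext PDown \<Gamma>1) A \<or> ty_i ty (ext PHash \<Gamma>1) A" using h(2) by (auto elim: tyLamIE)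
  then show ?case
  proof (elim disjE)
    assume "ty_i ty (ext PDown \<Gamma>1) A"
    then have "ty_i ty (ins 0 (Some PDown) \<Gamma>1) A" by (simp add: ext_ins)
    from subst_down[OF this refl ty.intros[OF g(2)] h(1) g(1)] show ?thesis using denv_refl by blast
  next
    assume "ty_i ty (ext PHash \<Gamma>1) A"
    then have a: "ty_i ty (ins 0 (Some PHash) \<Gamma>1) A" by (simp add: ext_ins)
    define \<Delta> where "\<Delta> = (\<lambda>n. hsh (G2 n))"
    define \<Gamma>' where "\<Gamma>' = (\<lambda>n. if \<Delta> n = None then \<Gamma>1 n else \<Delta> n)"
    have pt: "nl (\<Delta> n) \<and> wk (G2 n) (\<Delta> n) \<and> hcp (\<Gamma>1 n) (\<Delta> n) (\<Gamma>' n) \<and> dpt (\<Gamma> n) (\<Gamma>' n)" for n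
    proof -
      have "sp (\<Gamma> n) (\<Gamma>1 n) (\<Gamma>2 n)" using h(1) unfolding app_split_sp by blast
      moreover have "\<Gamma>2 n \<noteq> Some PLin" "G2 n = mif (\<Gamma>2 n)" using g(1) unfolding mi_env_iff by auto
      ultimately show ?thesis using li1_pt unfolding \<Delta>_def \<Gamma>'_def by presburger
    qed
    have "ty \<Delta> B" using weaken ty.intros[OF g(2)] pt unfolding wenv_def by blast
    then have "ty \<Gamma>' (subst 0 B A)" using subst_hash[OF a refl] pt unfolding hc_def by blast
    moreover have "denv \<Gamma> \<Gamma>'" using pt unfolding denv_def by blast
    ultimately show ?thesis by blast
  qed
next
  case (3 A B)
  have "ty_i ty \<Gamma> (App (LamC A) (BoxC B))" using 3 ty_iff by blast
  then obtain \<Gamma>1 \<Gamma>2 where h: "app_split \<Gamma> \<Gamma>1 \<Gamma>2" "ty_i ty \<Gamma>1 (LamC A)" "ty_i ty \<Gamma>2 (BoxC B)"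
    by (rule tyAppE)
  from h(3) obtain G2 where g: "mc_env \<Gamma>2 G2" "ty G2 B" by (auto elim: tyBoxCE)
  have pt: "\<Gamma>1 n = \<Gamma> n \<and> G2 n = mcf (\<Gamma> n)" for n
  proof -
    have "sp (\<Gamma> n) (\<Gamma>1 n) (\<Gamma>2 n)" using h(1) unfolding app_split_sp by blast
    moreover have "\<Gamma>2 n \<noteq> Some PLin" "\<Gamma>2 n \<noteq> Some PDown" "G2 n = mcf (\<Gamma>2 n)" using g(1) unfolding mc_env_iff by auto
    ultimately show ?thesis using lc_pt by metis
  qed
  then have e: "\<Gamma>1 = \<Gamma>" "G2 = (\<lambda>n. mcf (\<Gamma> n))" by auto
  from h(2) have "ty_i ty (ins 0 (Some PUp) \<Gamma>) A" using e by (auto elim: tyLamCE simp: ext_ins)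
  from subst_up[OF this refl] g(2) e show ?case using denv_refl by blast
qed


lemma split_denv_pt: "sp g g1 g2 \<Longrightarrow> dpt g1 g1' \<Longrightarrow>
  sp (if g1' \<noteq> g1 then Some PHash else g) g1' (if g1' \<noteq> g1 then Some PHash else g2) \<and>
  wk g2 (if g1' \<noteq> g1 then Some PHash else g2) \<and> dpt g (if g1' \<noteq> g1 then Some PHash else g)"
  unfolding sp_def dpt_def wk_def by (auto split: option.splits if_splits)

lemma split_denv: "app_split \<Gamma> \<Gamma>1 \<Gamma>2 \<Longrightarrow> denv \<Gamma>1 \<Gamma>1' \<Longrightarrow>
  \<exists>\<Gamma>' \<Gamma>2'. app_split \<Gamma>' \<Gamma>1' \<Gamma>2' \<and> wenv \<Gamma>2 \<Gamma>2' \<and> denv \<Gamma> \<Gamma>'"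
proof -
  assume a: "app_split \<Gamma> \<Gamma>1 \<Gamma>2" "denv \<Gamma>1 \<Gamma>1'"
  define \<Gamma>' where "\<Gamma>' = (\<lambda>n. if \<Gamma>1' n \<noteq> \<Gamma>1 n then Some PHash else \<Gamma> n)"
  define \<Gamma>2' where "\<Gamma>2' = (\<lambda>n. if \<Gamma>1' n \<noteq> \<Gamma>1 n then Some PHash else \<Gamma>2 n)"
  have "sp (\<Gamma>' n) (\<Gamma>1' n) (\<Gamma>2' n) \<and> wk (\<Gamma>2 n) (\<Gamma>2' n) \<and> dpt (\<Gamma> n) (\<Gamma>' n)" for n
  proof -
    have "sp (\<Gamma> n) (\<Gamma>1 n) (\<Gamma>2 n)" using a(1) unfolding app_split_sp by blast
    moreover have "dpt (\<Gamma>1 n) (\<Gamma>1' n)" using a(2) unfolding denv_def by blast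
    ultimately show ?thesis using split_denv_pt unfolding \<Gamma>'_def \<Gamma>2'_def by presburger
  qed
  then show ?thesis unfolding app_split_sp wenv_def denv_def by blast
qed

lemma denv_ext: "denv (ext p \<Gamma>) G \<Longrightarrow> \<exists>\<Gamma>' q. G = ext q \<Gamma>' \<and> denv \<Gamma> \<Gamma>' \<and> (q = p \<or> (p = PDown \<and> q = PHash))"
proof -
  assume d: "denv (ext p \<Gamma>) G"
  have "dpt (Some p) (G 0)" using d unfolding denv_def ext_def by (metis old.nat.simps(4))
  then obtain q where q: "G 0 = Some q" "q = p \<or> (p = PDown \<and> q = PHash)" unfolding dpt_def by auto
  have "G = ext q (del 0 G)" using q(1) ins_del[of 0 G] by (simp add: ext_ins)
  moreover have "denv \<Gamma> (del 0 G)" using d unfolding denv_def del_def ext_def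
    by (metis not_less_zero old.nat.simps(5))
  ultimately show ?thesis using q(2) by blast
qed

lemma noDown_denv: "\<forall>n. G n \<noteq> Some PDown \<Longrightarrow> denv G G' \<Longrightarrow> G' = G"
  unfolding denv_def dpt_def by auto

lemma mi_noDown: "mi_env \<Gamma> G \<Longrightarrow> \<forall>n. G n \<noteq> Some PDown"
  unfolding mi_env_iff mif_def by (auto split: option.splits pat.splits)
lemma mc_noDown: "mc_env \<Gamma> G \<Longrightarrow> \<forall>n. G n \<noteq> Some PDown"
  unfolding mc_env_iff mcf_def by (auto split: option.splits pat.splits)

lemma tyD: "ty \<Gamma> M \<Longrightarrow> ty_i ty \<Gamma> M" using ty_iff by blast

lemma sr_step: "step M N \<Longrightarrow> ty \<Gamma> M \<Longrightarrow> \<exists>\<Gamma>'. denv \<Gamma> \<Gamma>' \<and> ty \<Gamma>' N"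
proof (induction arbitrary: \<Gamma> rule: step.induct)
  case (1 M N) then show ?case using sr_basic by blast
next
  case (2 M M' N)
  from tyD[OF 2(3)] obtain \<Gamma>1 \<Gamma>2 where h: "app_split \<Gamma> \<Gamma>1 \<Gamma>2" "ty_i ty \<Gamma>1 M" "ty_i ty \<Gamma>2 N" by (rule tyAppE)
  obtain \<Gamma>1' where i: "denv \<Gamma>1 \<Gamma>1'" "ty \<Gamma>1' M'" using 2(2) ty.intros[OF h(2)] by blast
  obtain \<Gamma>' \<Gamma>2' where s: "app_split \<Gamma>' \<Gamma>1' \<Gamma>2'" "wenv \<Gamma>2 \<Gamma>2'" "denv \<Gamma> \<Gamma>'" using split_denv[OF h(1) i(1)] by blast
  have "ty \<Gamma>2' N" using weaken ty.intros[OF h(3)] s(2) by blast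
  then show ?case using s i tyI_app by blast
next
  case (3 N N' M)
  from tyD[OF 3(3)] obtain \<Gamma>1 \<Gamma>2 where h: "app_split \<Gamma> \<Gamma>1 \<Gamma>2" "ty_i ty \<Gamma>1 M" "ty_i ty \<Gamma>2 N" by (rule tyAppE)
  obtain \<Gamma>2' where i: "denv \<Gamma>2 \<Gamma>2'" "ty \<Gamma>2' N'" using 3(2) ty.intros[OF h(3)] by blast
  have h1: "app_split \<Gamma> \<Gamma>2 \<Gamma>1" using h(1) app_split_sym by blast
  obtain \<Gamma>' \<Gamma>1' where s: "app_split \<Gamma>' \<Gamma>2' \<Gamma>1'" "wenv \<Gamma>1 \<Gamma>1'" "denv \<Gamma> \<Gamma>'" using split_denv[OF h1 i(1)] by blast
  have "ty \<Gamma>1' M" using weaken ty.intros[OF h(2)] s(2) by blast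
  moreover have "app_split \<Gamma>' \<Gamma>1' \<Gamma>2'" using s(1) app_split_sym by blast
  ultimately show ?case using s i tyI_app by blast
next
  case (4 M M')
  from tyD[OF 4(3)] have "ty_i ty (ext PLin \<Gamma>) M" by (rule tyLamE)
  then obtain G where "denv (ext PLin \<Gamma>) G" "ty G M'" using 4(2) ty.intros by blast
  then obtain \<Gamma>' q where "G = ext q \<Gamma>'" "denv \<Gamma> \<Gamma>'" "q = PLin" using denv_ext by blast
  then show ?case using tyI_bind \<open>ty G M'\<close> by blast
next
  case (5 M M')
  from tyD[OF 5(3)] have "ty_i ty (ext PHash \<Gamma>) M \<or> ty_i ty (ext PDown \<Gamma>) M" by (auto elim: tyLamIE)
  then show ?case
  proof (elim disjE)
    assume "ty_i ty (ext PHash \<Gamma>) M"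
    then obtain G where "denv (ext PHash \<Gamma>) G" "ty G M'" using 5(2) ty.intros by blast
    then obtain \<Gamma>' q where "G = ext q \<Gamma>'" "denv \<Gamma> \<Gamma>'" "q = PHash" using denv_ext by blast
    then show ?case using tyI_bind \<open>ty G M'\<close> by blast
  next
    assume "ty_i ty (ext PDown \<Gamma>) M"
    then obtain G where "denv (ext PDown \<Gamma>) G" "ty G M'" using 5(2) ty.intros by blast
    then obtain \<Gamma>' q where "G = ext q \<Gamma>'" "denv \<Gamma> \<Gamma>'" "q = PDown \<or> q = PHash" using denv_ext by blast
    then show ?case using tyI_bind \<open>ty G M'\<close> by blast
  qed
next
  case (6 M M')
  from tyD[OF 6(3)] have "ty_i ty (ext PUp \<Gamma>) M" by (rule tyLamCE)
  then obtain G where "denv (ext PUp \<Gamma>) G" "ty G M'" using 6(2) ty.intros by blast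
  then obtain \<Gamma>' q where "G = ext q \<Gamma>'" "denv \<Gamma> \<Gamma>'" "q = PUp" using denv_ext by blast
  then show ?case using tyI_bind \<open>ty G M'\<close> by blast
next
  case (7 M M')
  from tyD[OF 7(3)] obtain G where g: "mi_env \<Gamma> G" "ty_i ty G M" by (rule tyBoxIE)
  then obtain G' where "denv G G'" "ty G' M'" using 7(2) ty.intros by blast
  then have "ty G M'" using noDown_denv mi_noDown[OF g(1)] by metis
  then show ?case using g(1) tyI_mi denv_refl by blast
next
  case (8 M M')
  from tyD[OF 8(3)] obtain G where g: "mc_env \<Gamma> G" "ty G M" by (rule tyBoxCE)
  then obtain G' where "denv G G'" "ty G' M'" using 8(2) by blast
  then have "ty G M'" using noDown_denv mc_noDown[OF g(1)] by metis
  then show ?case using g(1) tyI_mc denv_refl by blast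
qed

lemma step0_step: "step0 M N \<Longrightarrow> step M N"
  by (induction rule: step0.induct) (auto intro: step.intros)

lemma steps_pres: "step\<^sup>*\<^sup>* M N \<Longrightarrow> ty \<Gamma> M \<Longrightarrow> \<forall>n. \<Gamma> n \<noteq> Some PDown \<Longrightarrow> ty \<Gamma> N"
proof (induction rule: rtranclp_induct)
  case base then show ?case by simp
next
  case (step y z)
  then have "ty \<Gamma> y" by blast
  then obtain \<Gamma>' where "denv \<Gamma> \<Gamma>'" "ty \<Gamma>' z" using sr_step step(2) by blast
  then show ?case using noDown_denv step(5) by metis
qed


section \<open>Preservation under infinitary reduction\<close>

lemma ired_pres_i: "ired cored X Y \<Longrightarrow> ty_i ty \<Gamma> X \<Longrightarrow>
  ty_i (\<lambda>\<Gamma> L. (\<exists>X. ty \<Gamma> X \<and> cored X L \<and> (\<forall>n. \<Gamma> n \<noteq> Some PDown)) \<or> ty \<Gamma> L) \<Gamma> Y"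
  (is "_ \<Longrightarrow> _ \<Longrightarrow> ty_i ?S \<Gamma> Y")
proof (induction arbitrary: \<Gamma> rule: ired.induct)
  case (1 x) then show ?case by (rule ty_i_mono') simp
next
  case (2 M N L P)
  from 2(5) obtain \<Gamma>1 \<Gamma>2 where h: "app_split \<Gamma> \<Gamma>1 \<Gamma>2" "ty_i ty \<Gamma>1 M" "ty_i ty \<Gamma>2 L" by (rule tyAppE)
  show ?case by (rule ty_i.a[OF h(1) 2(3)[OF h(2)] 2(4)[OF h(3)]])
next
  case (3 M N)
  from 3(3) have "ty_i ty (ext PLin \<Gamma>) M" by (rule tyLamE)
  show ?case by (rule ty_i.ll[OF 3(2)[OF \<open>ty_i ty (ext PLin \<Gamma>) M\<close>]])
next
  case (4 M N)
  from 4(3) have "ty_i ty (ext PHash \<Gamma>) M \<or> ty_i ty (ext PDown \<Gamma>) M" by (auto elim: tyLamIE)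
  then show ?case
  proof
    assume "ty_i ty (ext PHash \<Gamma>) M" then show ?case by (rule ty_i.li1[OF 4(2)])
  next
    assume "ty_i ty (ext PDown \<Gamma>) M" then show ?case by (rule ty_i.li2[OF 4(2)])
  qed
next
  case (5 M N)
  from 5(3) have "ty_i ty (ext PUp \<Gamma>) M" by (rule tyLamCE)
  show ?case by (rule ty_i.lc[OF 5(2)[OF \<open>ty_i ty (ext PUp \<Gamma>) M\<close>]])
next
  case (6 M N)
  from 6(3) obtain G where g: "mi_env \<Gamma> G" "ty_i ty G M" by (rule tyBoxIE)
  show ?case by (rule ty_i.mi[OF g(1) 6(2)[OF g(2)]])
next
  case (7 M N)
  from 7(2) obtain G where g: "mc_env \<Gamma> G" "ty G M" by (rule tyBoxCE)
  have "?S G N" using g 7(1) mc_noDown by blast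
  then show ?case by (rule ty_i.mc[where X="?S", OF g(1)])
qed

lemma cored_pres: "ty \<Gamma> X \<Longrightarrow> cored X L \<Longrightarrow> \<forall>n. \<Gamma> n \<noteq> Some PDown \<Longrightarrow> ty \<Gamma> L"
proof (coinduction arbitrary: \<Gamma> X L rule: ty.coinduct)
  case (ty \<Gamma> X L)
  from ty(2) obtain X1 where s: "step\<^sup>*\<^sup>* X X1" "ired cored X1 L" by (cases rule: cored.cases) auto
  have "ty \<Gamma> X1" using steps_pres[OF s(1) ty(1) ty(3)] .
  note r = ired_pres_i[OF s(2) tyD[OF this]]
  show ?case
    apply (rule exI[of _ \<Gamma>], rule exI[of _ L], intro conjI refl)
    apply (rule ty_i_mono'[OF r])
    using ty(3) by blast
qed

lemma ired_pres: "ired cored M L \<Longrightarrow> ty \<Gamma> M \<Longrightarrow> ty \<Gamma> L"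
proof -
  assume a: "ired cored M L" "ty \<Gamma> M"
  from ired_pres_i[OF a(1) tyD[OF a(2)]] have
    "ty_i (\<lambda>\<Gamma> L. (\<exists>X. ty \<Gamma> X \<and> cored X L \<and> (\<forall>n. \<Gamma> n \<noteq> Some PDown)) \<or> ty \<Gamma> L) \<Gamma> L" .
  then have "ty_i ty \<Gamma> L" by (rule ty_i_mono') (auto intro: cored_pres)
  then show ?thesis by (rule ty.intros)
qed

lemma occ0_up: "occ0 k A \<Longrightarrow> ty_i X G A \<Longrightarrow> G k = Some PUp \<Longrightarrow> False"
proof (induction arbitrary: G rule: occ0.induct)
  case (1 k) then show ?case by (auto elim: tyVarE)
next
  case (2 k M N)
  from 2(3) obtain G1 G2 where h: "app_split G G1 G2" "ty_i X G1 M" "ty_i X G2 N" by (rule tyAppE)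
  have "sp (G k) (G1 k) (G2 k)" using h(1) unfolding app_split_sp by blast
  then have "G1 k = Some PUp" using 2(4) sp_Up by simp
  then show ?case using 2(2) h(2) by blast
next
  case (3 k N M)
  from 3(3) obtain G1 G2 where h: "app_split G G1 G2" "ty_i X G1 M" "ty_i X G2 N" by (rule tyAppE)
  have "sp (G k) (G1 k) (G2 k)" using h(1) unfolding app_split_sp by blast
  then have "G2 k = Some PUp" using 3(4) sp_Up by simp
  then show ?case using 3(2) h(3) by blast
next
  case (4 k M)
  from 4(3) have "ty_i X (ext PLin G) M" by (rule tyLamE)
  moreover have "ext PLin G (Suc k) = Some PUp" using 4(4) by (simp add: ext_def)
  ultimately show ?case using 4(2) by blast
next
  case (5 k M)
  from 5(3) have "ty_i X (ext PHash G) M \<or> ty_i X (ext PDown G) M" by (auto elim: tyLamIE)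
  moreover have "ext p G (Suc k) = Some PUp" for p using 5(4) by (simp add: ext_def)
  ultimately show ?case using 5(2) by blast
next
  case (6 k M)
  from 6(3) have "ty_i X (ext PUp G) M" by (rule tyLamCE)
  moreover have "ext PUp G (Suc k) = Some PUp" using 6(4) by (simp add: ext_def)
  ultimately show ?case using 6(2) by blast
next
  case (7 k M)
  from 7(3) obtain G' where g: "mi_env G G'" "ty_i X G' M" by (rule tyBoxIE)
  have "G' k = Some PUp" using g(1) 7(4) unfolding mi_env_iff by (simp add: mif_def)
  then show ?case using 7(2) g(2) by blast
qed

lemma ired_inv:
  "ired X (App M N) L \<Longrightarrow> \<exists>L1 L2. L = App L1 L2 \<and> ired X M L1 \<and> ired X N L2"
  "ired X (Lam M) L \<Longrightarrow> \<exists>L1. L = Lam L1 \<and> ired X M L1"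
  "ired X (LamI M) L \<Longrightarrow> \<exists>L1. L = LamI L1 \<and> ired X M L1"
  "ired X (LamC M) L \<Longrightarrow> \<exists>L1. L = LamC L1 \<and> ired X M L1"
  "ired X (BoxI M) L \<Longrightarrow> \<exists>L1. L = BoxI L1 \<and> ired X M L1"
  "ired X (BoxC M) L \<Longrightarrow> \<exists>L1. L = BoxC L1 \<and> X M L1"
  by (auto elim: ired.cases)

lemma red_main: "step0 M N \<Longrightarrow> ired cored M L \<Longrightarrow> ty_i ty \<Gamma> M \<Longrightarrow> \<exists>P. ired cored N P \<and> step0 L P"
proof (induction arbitrary: L \<Gamma> rule: step0.induct)
  case (1 M N)
  from 1(1) show ?case
  proof cases
    case (1 A B)
    from ired_inv(1)[of cored "Lam A" B L] \<open>ired cored M L\<close> 1 obtain L1 B' where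
      l0: "L = App L1 B'" "ired cored (Lam A) L1" "ired cored B B'" by blast
    from ired_inv(2)[OF l0(2)] obtain A' where l1: "L1 = Lam A'" "ired cored A A'" by blast
    have "ired cored N (subst 0 B' A')" using ired_subst[OF l1(2) l0(3)] 1 by simp
    moreover have "step0 L (subst 0 B' A')" unfolding l0(1) l1(1) by (rule step0.intros(1), rule basic.intros(1))
    ultimately show ?thesis by blast
  next
    case (2 A B)
    from ired_inv(1)[of cored "LamI A" "BoxI B" L] \<open>ired cored M L\<close> 2 obtain L1 L2 where
      l0: "L = App L1 L2" "ired cored (LamI A) L1" "ired cored (BoxI B) L2" by blast
    from ired_inv(3)[OF l0(2)] obtain A' where l1: "L1 = LamI A'" "ired cored A A'" by blast
    from ired_inv(5)[OF l0(3)] obtain B' where l2: "L2 = BoxI B'" "ired cored B B'" by blast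
    have "ired cored N (subst 0 B' A')" using ired_subst[OF l1(2) l2(2)] 2 by simp
    moreover have "step0 L (subst 0 B' A')" unfolding l0(1) l1(1) l2(1) by (rule step0.intros(1), rule basic.intros(2))
    ultimately show ?thesis by blast
  next
    case (3 A B)
    from ired_inv(1)[of cored "LamC A" "BoxC B" L] \<open>ired cored M L\<close> 3 obtain L1 L2 where
      l0: "L = App L1 L2" "ired cored (LamC A) L1" "ired cored (BoxC B) L2" by blast
    from ired_inv(4)[OF l0(2)] obtain A' where l1: "L1 = LamC A'" "ired cored A A'" by blast
    from ired_inv(6)[OF l0(3)] obtain B' where l2: "L2 = BoxC B'" "cored B B'" by blast
    have "ty_i ty \<Gamma> (App (LamC A) (BoxC B))" using \<open>ty_i ty \<Gamma> M\<close> 3 by simp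
    then obtain \<Gamma>1 \<Gamma>2 where "ty_i ty \<Gamma>1 (LamC A)" by (rule tyAppE)
    then have t: "ty_i ty (ext PUp \<Gamma>1) A" by (rule tyLamCE)
    have "ext PUp \<Gamma>1 0 = Some PUp" by (simp add: ext_def)
    then have "\<not> occ0 0 A" using occ0_up t by blast
    then have "ired cored N (subst 0 B' A')" using ired_subst_guard[OF l1(2) _ l2(2)] 3 by simp
    moreover have "step0 L (subst 0 B' A')" unfolding l0(1) l1(1) l2(1) by (rule step0.intros(1), rule basic.intros(3))
    ultimately show ?thesis by blast
  qed
next
  case (2 M M' N)
  from ired_inv(1)[OF 2(3)] obtain L1 L2 where l: "L = App L1 L2" "ired cored M L1" "ired cored N L2" by blast
  from 2(4) obtain \<Gamma>1 \<Gamma>2 where "ty_i ty \<Gamma>1 M" by (rule tyAppE)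
  then obtain P where p: "ired cored M' P" "step0 L1 P" using 2(2) l(2) by blast
  have "ired cored (App M' N) (App P L2)" by (rule ired.intros(2)[OF p(1) l(3)])
  moreover have "step0 L (App P L2)" unfolding l(1) by (rule step0.intros(2)[OF p(2)])
  ultimately show ?case by blast
next
  case (3 N N' M)
  from ired_inv(1)[OF 3(3)] obtain L1 L2 where l: "L = App L1 L2" "ired cored M L1" "ired cored N L2" by blast
  from 3(4) obtain \<Gamma>1 \<Gamma>2 where "ty_i ty \<Gamma>2 N" by (rule tyAppE)
  then obtain P where p: "ired cored N' P" "step0 L2 P" using 3(2) l(3) by blast
  have "ired cored (App M N') (App L1 P)" by (rule ired.intros(2)[OF l(2) p(1)])
  moreover have "step0 L (App L1 P)" unfolding l(1) by (rule step0.intros(3)[OF p(2)])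
  ultimately show ?case by blast
next
  case (4 M M')
  from ired_inv(2)[OF 4(3)] obtain L1 where l: "L = Lam L1" "ired cored M L1" by blast
  from 4(4) have "ty_i ty (ext PLin \<Gamma>) M" by (rule tyLamE)
  then obtain P where p: "ired cored M' P" "step0 L1 P" using 4(2) l(2) by blast
  have "ired cored (Lam M') (Lam P)" by (rule ired.intros(3)[OF p(1)])
  moreover have "step0 L (Lam P)" unfolding l(1) by (rule step0.intros(4)[OF p(2)])
  ultimately show ?case by blast
next
  case (5 M M')
  from ired_inv(3)[OF 5(3)] obtain L1 where l: "L = LamI L1" "ired cored M L1" by blast
  from 5(4) have "ty_i ty (ext PHash \<Gamma>) M \<or> ty_i ty (ext PDown \<Gamma>) M" by (auto elim: tyLamIE)
  then obtain G where "ty_i ty G M" by blast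
  then obtain P where p: "ired cored M' P" "step0 L1 P" using 5(2) l(2) by blast
  have "ired cored (LamI M') (LamI P)" by (rule ired.intros(4)[OF p(1)])
  moreover have "step0 L (LamI P)" unfolding l(1) by (rule step0.intros(5)[OF p(2)])
  ultimately show ?case by blast
next
  case (6 M M')
  from ired_inv(4)[OF 6(3)] obtain L1 where l: "L = LamC L1" "ired cored M L1" by blast
  from 6(4) have "ty_i ty (ext PUp \<Gamma>) M" by (rule tyLamCE)
  then obtain P where p: "ired cored M' P" "step0 L1 P" using 6(2) l(2) by blast
  have "ired cored (LamC M') (LamC P)" by (rule ired.intros(5)[OF p(1)])
  moreover have "step0 L (LamC P)" unfolding l(1) by (rule step0.intros(6)[OF p(2)])
  ultimately show ?case by blast
next
  case (7 M M')
  from ired_inv(5)[OF 7(3)] obtain L1 where l: "L = BoxI L1" "ired cored M L1" by blast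
  from 7(4) obtain G where "mi_env \<Gamma> G" "ty_i ty G M" by (rule tyBoxIE)
  then obtain P where p: "ired cored M' P" "step0 L1 P" using 7(2) l(2) by blast
  have "ired cored (BoxI M') (BoxI P)" by (rule ired.intros(6)[OF p(1)])
  moreover have "step0 L (BoxI P)" unfolding l(1) by (rule step0.intros(7)[OF p(2)])
  ultimately show ?case by blast
qed

theorem mainTheorem18:
  assumes "is_term M" and "step0 M N" and "ired_rel M L"
  shows "\<exists>P. is_term P \<and> ired_rel N P \<and> step0 L P"
proof -
  from assms(1) obtain \<Gamma> where g: "finite (dom \<Gamma>)" "ty \<Gamma> M" unfolding is_term_def by blast
  obtain P where p: "ired cored N P" "step0 L P" using red_main[OF assms(2) assms(3) tyD[OF g(2)]] by blast
  have "ty \<Gamma> L" using ired_pres[OF assms(3) g(2)] .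
  then obtain \<Gamma>' where d: "denv \<Gamma> \<Gamma>'" "ty \<Gamma>' P" using sr_step step0_step[OF p(2)] by blast
  have "(\<Gamma>' n = None) = (\<Gamma> n = None)" for n using d(1) unfolding denv_def dpt_def by (metis option.distinct(1))
  then have "dom \<Gamma>' = dom \<Gamma>" unfolding dom_def by simp
  then have "finite (dom \<Gamma>')" using g(1) by simp
  then have "is_term P" using d(2) unfolding is_term_def by blast
  then show ?thesis using p by blast
qed


end
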